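(* Assume $2\hat P-P+A_2^TA_2$ is symmetric positive definite. Then the eigenpairs of $\mathcal{M}_4^{-1}\mathcal{A}$ have the following structure: (i) $\mu=1$ is an eigenvalue with geometric multiplicity $p+q+d$, where $d=\dim\big(\mathcal{N}(\hat P-P)\cap\mathcal{N}(A_2)\big)$; a basis of the eigenspace consists of the $p+q$ vectors $(x_i;0;0)$, $(0;0;z_j)$, with $\{x_i\}_{i=1}^p$, $\{z_j\}_{j=1}^q$ bases of $\mathbb{R}^p$, $\mathbb{R}^q$, together with the $d$ vectors $(0;y_k;0)$, where $\{y_k\}_{k=1}^d$ is a basis of $\mathcal{N}(\hat P-P)\cap\mathcal{N}(A_2)$. (ii) If $\mu\ne1$ is an eigenvalue, every corresponding eigenvector has the form $\left(-A_1y;\,y;\,\frac{1}{\mu-1}A_2y\right)$ where $y\neq0$ satisfies $\hat P^{-1}(P-A_2^TA_2)y=\mu y$ (and conversely); the geometric multiplicity $h_\mu$ of $\mu$ is the number of linearly independent such $y$, and if $h$ is the total number of linearly independent eigenvectors for non-unit eigenvalues, then $0\le h_\mu\le h\le n$ and $\mathcal{M}_4^{-1}\mathcal{A}$ has $p+q+d+h$ linearly independent eigenvectors. (iii) All eigenvalues of $\mathcal{M}_4^{-1}\mathcal{A}$ are real and lie in the interval $(0,2)$.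
   Context: Let $A_1\in\mathbb{R}^{p\times n}$ have full column rank and $A_2\in\mathbb{R}^{q\times n}$. Set $P=A_1^TA_1$ and assume $P-A_2^TA_2$ is symmetric positive definite. Let $\hat P\in\mathbb{R}^{n\times n}$ be symmetric positive definite. Define $\mathcal{A}=\begin{pmatrix}I_p&A_1&0\\0&P&A_2^T\\0&A_2&I_q\end{pmatrix}$ and $\mathcal{M}_4=\begin{pmatrix}I_p&A_1&0\\0&\hat P&A_2^T\\0&0&I_q\end{pmatrix}$. Vectors are written $(x;y;z)$ with $x\in\mathbb{C}^p,y\in\mathbb{C}^n,z\in\mathbb{C}^q$. $\mathcal{N}(\cdot)$ denotes null space. *)

theory Defs
  imports "Jordan_Normal_Form.Matrix_Kernel" "Jordan_Normal_Form.Char_Poly"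
    "Jordan_Normal_Form.Gauss_Jordan_Elimination" "Jordan_Normal_Form.DL_Rank"
begin

definition spd :: "real mat \<Rightarrow> nat \<Rightarrow> bool" where
  "spd M n \<longleftrightarrow> M \<in> carrier_mat n n \<and> transpose_mat M = M \<and>
     (\<forall>x \<in> carrier_vec n. x \<noteq> 0\<^sub>v n \<longrightarrow> x \<bullet> (M *\<^sub>v x) > 0)"

definition cmat :: "real mat \<Rightarrow> complex mat" where
  "cmat M = map_mat complex_of_real M"

definition hcat :: "'a :: zero mat \<Rightarrow> 'a mat \<Rightarrow> 'a mat" where
  "hcat A B = four_block_mat A B (0\<^sub>m 0 (dim_col A)) (0\<^sub>m 0 (dim_col B))"

definition Pmat :: "real mat \<Rightarrow> real mat" where
  "Pmat A1 = transpose_mat A1 * A1"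

(* the block matrix  [I_p A1 0; 0 P A2^T; 0 A2 I_q] *)
definition Acal :: "nat \<Rightarrow> nat \<Rightarrow> nat \<Rightarrow> real mat \<Rightarrow> real mat \<Rightarrow> real mat" where
  "Acal p n q A1 A2 = four_block_mat (1\<^sub>m p) (hcat A1 (0\<^sub>m p q)) (0\<^sub>m (n + q) p)
      (four_block_mat (Pmat A1) (transpose_mat A2) A2 (1\<^sub>m q))"

(* the block preconditioner  [I_p A1 0; 0 Phat A2^T; 0 0 I_q] *)
definition M4cal :: "nat \<Rightarrow> nat \<Rightarrow> nat \<Rightarrow> real mat \<Rightarrow> real mat \<Rightarrow> real mat \<Rightarrow> real mat" where
  "M4cal p n q A1 A2 Ph = four_block_mat (1\<^sub>m p) (hcat A1 (0\<^sub>m p q)) (0\<^sub>m (n + q) p)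
      (four_block_mat Ph (transpose_mat A2) (0\<^sub>m q n) (1\<^sub>m q))"

definition clin_indpt :: "nat \<Rightarrow> complex vec set \<Rightarrow> bool" where
  "clin_indpt N S = (\<not> module.lin_dep class_ring (module_vec TYPE(complex) N) S)"

definition cbasis :: "nat \<Rightarrow> complex vec set \<Rightarrow> complex vec set \<Rightarrow> bool" where
  "cbasis N W S = vectorspace.basis class_ring ((module_vec TYPE(complex) N)\<lparr>carrier := W\<rparr>) S"

definition cdim :: "nat \<Rightarrow> complex vec set \<Rightarrow> nat" where
  "cdim N W = vectorspace.dim class_ring ((module_vec TYPE(complex) N)\<lparr>carrier := W\<rparr>)"

end

theory Submission
  imports Defs
begin

definition qf :: "real mat \<Rightarrow> complex vec \<Rightarrow> complex" where
  "qf M y = (\<Sum>i<dim_vec y. \<Sum>j<dim_vec y. cnj (y$i) * of_real (M$$(i,j)) * y$j)"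

lemma re_term: "Re (cnj u * complex_of_real r * w) = r * (Re u * Re w) + r * (Im u * Im w)"
  by (simp add: algebra_simps)
lemma im_term: "Im (cnj u * complex_of_real r * w) = r * (Re u * Im w) - r * (Im u * Re w)"
  by (simp add: algebra_simps)

lemma quad_real: fixes M :: "real mat" assumes M: "M \<in> carrier_mat n n" and a: "a \<in> carrier_vec n"
  shows "a \<bullet> (M *\<^sub>v a) = (\<Sum>i<n. \<Sum>j<n. M$$(i,j) * (a$i * a$j))"
proof -
  have "a \<bullet> (M *\<^sub>v a) = (\<Sum>i<n. a$i * (\<Sum>j<n. M$$(i,j) * a$j))"
    using M a by (auto simp: scalar_prod_def lessThan_atLeast0 intro!: sum.cong)
  also have "\<dots> = (\<Sum>i<n. \<Sum>j<n. M$$(i,j) * (a$i * a$j))"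
    unfolding sum_distrib_left by (intro sum.cong refl) (simp add: mult_ac)
  finally show ?thesis .
qed

lemma qf_re: assumes M: "M \<in> carrier_mat n n" and y: "y \<in> carrier_vec n"
  shows "Re (qf M y) = map_vec Re y \<bullet> (M *\<^sub>v map_vec Re y) + map_vec Im y \<bullet> (M *\<^sub>v map_vec Im y)"
proof -
  have "Re (qf M y) = (\<Sum>i<n. \<Sum>j<n. M$$(i,j) * (Re (y$i) * Re (y$j)) + M$$(i,j) * (Im (y$i) * Im (y$j)))"
    using y unfolding qf_def by (simp only: Re_sum re_term carrier_vecD)
  also have "\<dots> = (\<Sum>i<n. \<Sum>j<n. M$$(i,j) * (Re (y$i) * Re (y$j))) + (\<Sum>i<n. \<Sum>j<n. M$$(i,j) * (Im (y$i) * Im (y$j)))"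
    by (simp only: sum.distrib)
  also have "\<dots> = map_vec Re y \<bullet> (M *\<^sub>v map_vec Re y) + map_vec Im y \<bullet> (M *\<^sub>v map_vec Im y)"
    using y by (simp add: quad_real[OF M])
  finally show ?thesis .
qed

lemma qf_im: assumes M: "M \<in> carrier_mat n n" and sym: "transpose_mat M = M" and y: "y \<in> carrier_vec n"
  shows "Im (qf M y) = 0"
proof -
  have s: "\<And>i j. i < n \<Longrightarrow> j < n \<Longrightarrow> M$$(i,j) = M$$(j,i)"
    by (metis M carrier_matD index_transpose_mat(1) sym)
  have "Im (qf M y) = (\<Sum>i<n. \<Sum>j<n. M$$(i,j) * (Re (y$i) * Im (y$j)) - M$$(i,j) * (Im (y$i) * Re (y$j)))"
    using y unfolding qf_def by (simp only: Im_sum im_term carrier_vecD)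
  also have "\<dots> = (\<Sum>i<n. \<Sum>j<n. M$$(i,j) * (Re (y$i) * Im (y$j))) - (\<Sum>i<n. \<Sum>j<n. M$$(i,j) * (Im (y$i) * Re (y$j)))"
    by (simp only: sum_subtractf)
  also have "(\<Sum>i<n. \<Sum>j<n. M$$(i,j) * (Im (y$i) * Re (y$j))) = (\<Sum>j<n. \<Sum>i<n. M$$(i,j) * (Im (y$i) * Re (y$j)))"
    by (rule sum.swap)
  also have "\<dots> = (\<Sum>i<n. \<Sum>j<n. M$$(i,j) * (Re (y$i) * Im (y$j)))"
    by (intro sum.cong refl, simp add: s mult_ac)
  finally show ?thesis by simp
qed

lemma spd_nonneg: assumes "spd M n" "a \<in> carrier_vec n" shows "a \<bullet> (M *\<^sub>v a) \<ge> 0"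
proof (cases "a = 0\<^sub>v n")
  case True thus ?thesis using assms unfolding spd_def by auto
next
  case False thus ?thesis using assms unfolding spd_def by force
qed

lemma qf_pos: assumes M: "spd M n" and y: "y \<in> carrier_vec n" and y0: "y \<noteq> 0\<^sub>v n"
  shows "Re (qf M y) > 0" "Im (qf M y) = 0"
proof -
  have Mc: "M \<in> carrier_mat n n" and sym: "transpose_mat M = M" using M unfolding spd_def by auto
  show "Im (qf M y) = 0" by (rule qf_im[OF Mc sym y])
  have "map_vec Re y \<noteq> 0\<^sub>v n \<or> map_vec Im y \<noteq> 0\<^sub>v n"
  proof (rule ccontr)
    assume "\<not> ?thesis"
    hence "\<forall>i<n. Re (y$i) = 0 \<and> Im (y$i) = 0" 
      by (metis carrier_vecD index_map_vec(1) index_zero_vec(1) y)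
    hence "y = 0\<^sub>v n" using y by (intro eq_vecI) (auto simp: complex_eq_iff)
    with y0 show False by simp
  qed
  moreover have "map_vec Re y \<in> carrier_vec n" "map_vec Im y \<in> carrier_vec n" using y by auto
  ultimately show "Re (qf M y) > 0" unfolding qf_re[OF Mc y]
    using spd_nonneg[OF M] M unfolding spd_def
    by (metis add_nonneg_pos add_pos_nonneg)
qed

lemma hcat_mult: fixes X :: "'a :: comm_ring_1 mat"
  assumes X: "X \<in> carrier_mat p n" and y: "y \<in> carrier_vec n" and z: "z \<in> carrier_vec q"
  shows "hcat X (0\<^sub>m p q) *\<^sub>v (y @\<^sub>v z) = X *\<^sub>v y"
proof -
  have "hcat X (0\<^sub>m p q) *\<^sub>v (y @\<^sub>v z) = (X *\<^sub>v y + 0\<^sub>m p q *\<^sub>v z) @\<^sub>v (0\<^sub>m 0 n *\<^sub>v y + 0\<^sub>m 0 q *\<^sub>v z)"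
    unfolding hcat_def using X y z by (subst four_block_mat_mult_vec[of _ p n _ q _ 0]) auto
  also have "\<dots> = X *\<^sub>v y" using X y z by (intro eq_vecI) auto
  finally show ?thesis .
qed

lemma block_mult: fixes X :: "'a :: comm_ring_1 mat"
  assumes X: "X \<in> carrier_mat p n" and Y: "Y \<in> carrier_mat n n" and Z: "Z \<in> carrier_mat n q"
   and U: "U \<in> carrier_mat q n" and V: "V \<in> carrier_mat q q"
   and x: "x \<in> carrier_vec p" and y: "y \<in> carrier_vec n" and z: "z \<in> carrier_vec q"
  shows "four_block_mat (1\<^sub>m p) (hcat X (0\<^sub>m p q)) (0\<^sub>m (n + q) p) (four_block_mat Y Z U V) *\<^sub>v (x @\<^sub>v y @\<^sub>v z)
     = (x + X *\<^sub>v y) @\<^sub>v (Y *\<^sub>v y + Z *\<^sub>v z) @\<^sub>v (U *\<^sub>v y + V *\<^sub>v z)"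
proof -
  have H: "hcat X (0\<^sub>m p q) \<in> carrier_mat p (n+q)" unfolding hcat_def using X by auto
  have "four_block_mat (1\<^sub>m p) (hcat X (0\<^sub>m p q)) (0\<^sub>m (n + q) p) (four_block_mat Y Z U V) *\<^sub>v (x @\<^sub>v y @\<^sub>v z)
    = (1\<^sub>m p *\<^sub>v x + hcat X (0\<^sub>m p q) *\<^sub>v (y @\<^sub>v z)) @\<^sub>v (0\<^sub>m (n + q) p *\<^sub>v x + four_block_mat Y Z U V *\<^sub>v (y @\<^sub>v z))"
    using H x y z Y Z U V by (intro four_block_mat_mult_vec) auto
  also have "four_block_mat Y Z U V *\<^sub>v (y @\<^sub>v z) = (Y *\<^sub>v y + Z *\<^sub>v z) @\<^sub>v (U *\<^sub>v y + V *\<^sub>v z)"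
    using Y Z U V y z by (intro four_block_mat_mult_vec) auto
  also have "hcat X (0\<^sub>m p q) *\<^sub>v (y @\<^sub>v z) = X *\<^sub>v y" by (rule hcat_mult[OF X y z])
  also have "0\<^sub>m (n + q) p *\<^sub>v x + ((Y *\<^sub>v y + Z *\<^sub>v z) @\<^sub>v (U *\<^sub>v y + V *\<^sub>v z)) = (Y *\<^sub>v y + Z *\<^sub>v z) @\<^sub>v (U *\<^sub>v y + V *\<^sub>v z)"
    using x y z Y Z U V by (intro eq_vecI) auto
  finally show ?thesis using x by simp
qed

lemma cmat_carrier[simp]: "cmat M \<in> carrier_mat r c \<longleftrightarrow> M \<in> carrier_mat r c"
  unfolding cmat_def carrier_mat_def by auto

lemma cmat_dims[simp]: "dim_row (cmat M) = dim_row M" "dim_col (cmat M) = dim_col M"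
  unfolding cmat_def by auto

lemma cmat_hcat: assumes X: "X \<in> carrier_mat p n" shows "cmat (hcat X (0\<^sub>m p q)) = hcat (cmat X) (0\<^sub>m p q)"
  unfolding cmat_def hcat_def using X by (intro eq_matI) auto

lemma cmat_block: assumes X: "X \<in> carrier_mat p n" and Y: "Y \<in> carrier_mat n n" and Z: "Z \<in> carrier_mat n q"
   and U: "U \<in> carrier_mat q n" and V: "V \<in> carrier_mat q q"
  shows "cmat (four_block_mat (1\<^sub>m p) (hcat X (0\<^sub>m p q)) (0\<^sub>m (n + q) p) (four_block_mat Y Z U V))
   = four_block_mat (1\<^sub>m p) (hcat (cmat X) (0\<^sub>m p q)) (0\<^sub>m (n + q) p) (four_block_mat (cmat Y) (cmat Z) (cmat U) (cmat V))"
  unfolding cmat_def hcat_def using X Y Z U V by (intro eq_matI) auto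


lemma smult_append3: "k \<cdot>\<^sub>v (a @\<^sub>v b @\<^sub>v c) = (k \<cdot>\<^sub>v a) @\<^sub>v (k \<cdot>\<^sub>v b) @\<^sub>v (k \<cdot>\<^sub>v c)"
  by (intro eq_vecI) (auto simp: nth_append)

lemma append3_eq: assumes "a \<in> carrier_vec p" "a' \<in> carrier_vec p" "b \<in> carrier_vec n" "b' \<in> carrier_vec n"
  shows "(a @\<^sub>v b @\<^sub>v c = a' @\<^sub>v b' @\<^sub>v c') \<longleftrightarrow> a = a' \<and> b = b' \<and> c = c'"
  using assms by simp

lemma spd_det: assumes "spd M n" shows "det M \<noteq> 0"
proof
  assume "det M = 0"
  moreover have M: "M \<in> carrier_mat n n" using assms unfolding spd_def by auto
  ultimately obtain v where v: "v \<in> carrier_vec n" "v \<noteq> 0\<^sub>v n" "M *\<^sub>v v = 0\<^sub>v n"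
    using det_0_iff_vec_prod_zero_field[OF M] by auto
  hence "v \<bullet> (M *\<^sub>v v) > 0" using assms unfolding spd_def by auto
  with v show False by simp
qed

lemma inverse_from_det: assumes M: "(M :: real mat) \<in> carrier_mat n n" and d: "det M \<noteq> 0"
  shows "the (mat_inverse M) \<in> carrier_mat n n \<and> M * the (mat_inverse M) = 1\<^sub>m n \<and> the (mat_inverse M) * M = 1\<^sub>m n"
proof -
  have "M \<in> Units (ring_mat TYPE(real) n ())" by (rule det_non_zero_imp_unit[OF M d])
  have "mat_inverse M \<noteq> None"
  proof
    assume "mat_inverse M = None"
    from mat_inverse(1)[OF M this, of "()"] show False using \<open>M \<in> Units (ring_mat TYPE(real) n ())\<close> by simp
  qed
  then obtain Mi where e: "mat_inverse M = Some Mi" by auto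
  from mat_inverse(2)[OF M e] e show ?thesis by auto
qed

locale tsetup =
  fixes p n q :: nat and A1 A2 Ph :: "real mat"
  assumes n_pos: "0 < n"
    and A1: "A1 \<in> carrier_mat p n" and A2: "A2 \<in> carrier_mat q n"
    and P_spd: "spd (Pmat A1 - transpose_mat A2 * A2) n"
    and Ph_spd: "spd Ph n"
    and cond: "spd (2 \<cdot>\<^sub>m Ph - Pmat A1 + transpose_mat A2 * A2) n"
begin

abbreviation "N \<equiv> p + n + q"
abbreviation "P \<equiv> Pmat A1"
abbreviation "G \<equiv> transpose_mat A2 * A2"
abbreviation "K \<equiv> Pmat A1 - transpose_mat A2 * A2"
abbreviation "Mi \<equiv> the (mat_inverse (M4cal p n q A1 A2 Ph))"
abbreviation "Phi \<equiv> the (mat_inverse Ph)"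
abbreviation "B \<equiv> cmat (Mi * Acal p n q A1 A2)"
abbreviation "C \<equiv> cmat (Phi * K)"

lemma P: "P \<in> carrier_mat n n" unfolding Pmat_def using A1 by auto
lemma G: "G \<in> carrier_mat n n" using A2 by auto
lemma K: "K \<in> carrier_mat n n" using A2 P by auto
lemma Ph: "Ph \<in> carrier_mat n n" using Ph_spd unfolding spd_def by auto
lemma A2T: "transpose_mat A2 \<in> carrier_mat n q" using A2 by auto

lemma Phi: "Phi \<in> carrier_mat n n" "Ph * Phi = 1\<^sub>m n" "Phi * Ph = 1\<^sub>m n"
  using inverse_from_det[OF Ph spd_det[OF Ph_spd]] by auto

lemma Acal: "Acal p n q A1 A2 \<in> carrier_mat N N"
  unfolding Acal_def hcat_def using A1 A2 P by (auto simp: add.assoc)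
lemma M4: "M4cal p n q A1 A2 Ph \<in> carrier_mat N N"
  unfolding M4cal_def hcat_def using A1 A2 Ph by (auto simp: add.assoc)

lemma M4_det: "det (M4cal p n q A1 A2 Ph) \<noteq> 0"
proof -
  have H: "hcat A1 (0\<^sub>m p q) \<in> carrier_mat p (n+q)" unfolding hcat_def using A1 by auto
  have I: "four_block_mat Ph (transpose_mat A2) (0\<^sub>m q n) (1\<^sub>m q) \<in> carrier_mat (n+q) (n+q)"
    using Ph A2 by auto
  have "det (M4cal p n q A1 A2 Ph) = det (1\<^sub>m p) * det (four_block_mat Ph (transpose_mat A2) (0\<^sub>m q n) (1\<^sub>m q))"
    unfolding M4cal_def by (rule det_four_block_mat_lower_left_zero[OF _ H refl I]) auto
  also have "det (four_block_mat Ph (transpose_mat A2) (0\<^sub>m q n) (1\<^sub>m q)) = det Ph * det (1\<^sub>m q)"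
    by (rule det_four_block_mat_lower_left_zero[OF Ph A2T refl]) auto
  finally show ?thesis using spd_det[OF Ph_spd] by simp
qed

lemma Mi: "Mi \<in> carrier_mat N N" "M4cal p n q A1 A2 Ph * Mi = 1\<^sub>m N" "Mi * M4cal p n q A1 A2 Ph = 1\<^sub>m N"
  using inverse_from_det[OF M4 M4_det] by auto

lemma B: "B \<in> carrier_mat N N" using Mi Acal by simp
lemma C: "C \<in> carrier_mat n n" using Phi K by simp

lemma cmat_mult: assumes "X \<in> carrier_mat a b" "Y \<in> carrier_mat b c" shows "cmat (X * Y) = cmat X * cmat Y"
  unfolding cmat_def by (rule of_real_hom.mat_hom_mult[OF assms])

lemma cmat_one: "cmat (1\<^sub>m k) = 1\<^sub>m k" unfolding cmat_def by (rule of_real_hom.mat_hom_one)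

lemma cmat_minus: assumes "X \<in> carrier_mat a b" "Y \<in> carrier_mat a b" shows "cmat (X - Y) = cmat X - cmat Y"
  unfolding cmat_def using assms by (intro eq_matI) auto

lemma Acal_c: "cmat (Acal p n q A1 A2) = four_block_mat (1\<^sub>m p) (hcat (cmat A1) (0\<^sub>m p q)) (0\<^sub>m (n + q) p)
   (four_block_mat (cmat P) (cmat (transpose_mat A2)) (cmat A2) (1\<^sub>m q))"
  unfolding Acal_def using cmat_block[OF A1 P A2T A2 one_carrier_mat] cmat_one by simp

lemma M4_c: "cmat (M4cal p n q A1 A2 Ph) = four_block_mat (1\<^sub>m p) (hcat (cmat A1) (0\<^sub>m p q)) (0\<^sub>m (n + q) p)
   (four_block_mat (cmat Ph) (cmat (transpose_mat A2)) (0\<^sub>m q n) (1\<^sub>m q))"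
proof -
  have "cmat (0\<^sub>m q n) = 0\<^sub>m q n" unfolding cmat_def by (intro eq_matI) auto
  thus ?thesis unfolding M4cal_def using cmat_block[OF A1 Ph A2T zero_carrier_mat one_carrier_mat] cmat_one by simp
qed

lemma B_iff: assumes v: "v \<in> carrier_vec N"
  shows "B *\<^sub>v v = \<mu> \<cdot>\<^sub>v v \<longleftrightarrow> cmat (Acal p n q A1 A2) *\<^sub>v v = \<mu> \<cdot>\<^sub>v (cmat (M4cal p n q A1 A2 Ph) *\<^sub>v v)"
proof -
  have Mic: "cmat Mi \<in> carrier_mat N N" and Ac: "cmat (Acal p n q A1 A2) \<in> carrier_mat N N"
    and Mc: "cmat (M4cal p n q A1 A2 Ph) \<in> carrier_mat N N" using Mi Acal M4 by auto
  have 1: "cmat (M4cal p n q A1 A2 Ph) * cmat Mi = 1\<^sub>m N" "cmat Mi * cmat (M4cal p n q A1 A2 Ph) = 1\<^sub>m N"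
    using cmat_mult[OF M4 Mi(1)] cmat_mult[OF Mi(1) M4] Mi cmat_one by auto
  have Bv: "B *\<^sub>v v = cmat Mi *\<^sub>v (cmat (Acal p n q A1 A2) *\<^sub>v v)"
    using cmat_mult[OF Mi(1) Acal] assoc_mult_mat_vec[OF Mic Ac v] by simp
  show ?thesis
  proof
    assume "B *\<^sub>v v = \<mu> \<cdot>\<^sub>v v"
    hence "cmat (M4cal p n q A1 A2 Ph) *\<^sub>v (cmat Mi *\<^sub>v (cmat (Acal p n q A1 A2) *\<^sub>v v)) = cmat (M4cal p n q A1 A2 Ph) *\<^sub>v (\<mu> \<cdot>\<^sub>v v)"
      using Bv by simp
    thus "cmat (Acal p n q A1 A2) *\<^sub>v v = \<mu> \<cdot>\<^sub>v (cmat (M4cal p n q A1 A2 Ph) *\<^sub>v v)"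
      using assoc_mult_mat_vec[OF Mc Mic, of "cmat (Acal p n q A1 A2) *\<^sub>v v"] Ac v 1 Mc
      by (simp add: mult_mat_vec)
  next
    assume "cmat (Acal p n q A1 A2) *\<^sub>v v = \<mu> \<cdot>\<^sub>v (cmat (M4cal p n q A1 A2 Ph) *\<^sub>v v)"
    hence "B *\<^sub>v v = cmat Mi *\<^sub>v (\<mu> \<cdot>\<^sub>v (cmat (M4cal p n q A1 A2 Ph) *\<^sub>v v))" using Bv by simp
    also have "\<dots> = \<mu> \<cdot>\<^sub>v v" using Mic Mc v 1 assoc_mult_mat_vec[OF Mic Mc v] by (simp add: mult_mat_vec)
    finally show "B *\<^sub>v v = \<mu> \<cdot>\<^sub>v v" .
  qed
qed

abbreviation "a1 y \<equiv> cmat A1 *\<^sub>v y"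
abbreviation "a2 y \<equiv> cmat A2 *\<^sub>v y"
abbreviation "a2t z \<equiv> cmat (transpose_mat A2) *\<^sub>v z"

lemma B_eq: assumes x: "x \<in> carrier_vec p" and y: "y \<in> carrier_vec n" and z: "z \<in> carrier_vec q"
  shows "B *\<^sub>v (x @\<^sub>v y @\<^sub>v z) = \<mu> \<cdot>\<^sub>v (x @\<^sub>v y @\<^sub>v z) \<longleftrightarrow>
    x + a1 y = \<mu> \<cdot>\<^sub>v (x + a1 y) \<and> cmat P *\<^sub>v y + a2t z = \<mu> \<cdot>\<^sub>v (cmat Ph *\<^sub>v y + a2t z)
    \<and> a2 y + z = \<mu> \<cdot>\<^sub>v z"
proof -
  have v: "x @\<^sub>v y @\<^sub>v z \<in> carrier_vec N" using x y z by (simp add: add.assoc)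
  have cs: "cmat A1 \<in> carrier_mat p n" "cmat P \<in> carrier_mat n n" "cmat Ph \<in> carrier_mat n n"
    "cmat (transpose_mat A2) \<in> carrier_mat n q" "cmat A2 \<in> carrier_mat q n" using A1 P Ph A2 by auto
  have e1: "cmat (Acal p n q A1 A2) *\<^sub>v (x @\<^sub>v y @\<^sub>v z) = (x + a1 y) @\<^sub>v (cmat P *\<^sub>v y + a2t z) @\<^sub>v (a2 y + 1\<^sub>m q *\<^sub>v z)"
    unfolding Acal_c by (rule block_mult[OF cs(1,2,4,5) one_carrier_mat x y z])
  have e2: "cmat (M4cal p n q A1 A2 Ph) *\<^sub>v (x @\<^sub>v y @\<^sub>v z) = (x + a1 y) @\<^sub>v (cmat Ph *\<^sub>v y + a2t z) @\<^sub>v (0\<^sub>m q n *\<^sub>v y + 1\<^sub>m q *\<^sub>v z)"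
    unfolding M4_c by (rule block_mult[OF cs(1,3,4) zero_carrier_mat one_carrier_mat x y z])
  have e3: "0\<^sub>m q n *\<^sub>v y + 1\<^sub>m q *\<^sub>v z = z" using y z by (intro eq_vecI) auto
  show ?thesis unfolding B_iff[OF v] unfolding e1 e2 e3 smult_append3 using x y z cs
    by (subst append3_eq[of _ p _ _ n]) auto
qed

end

lemma scal_fix: "((s::complex) = \<mu> * s) \<longleftrightarrow> (\<mu> = 1 \<or> s = 0)"
  by (metis mult.commute mult_cancel_left2)

lemma vec_eq1: assumes x: "x \<in> carrier_vec k" and a: "a \<in> carrier_vec k" and mu: "\<mu> \<noteq> (1::complex)"
  shows "(x + a = \<mu> \<cdot>\<^sub>v (x + a)) \<longleftrightarrow> x = - a"
proof -
  have "(x + a = \<mu> \<cdot>\<^sub>v (x + a)) \<longleftrightarrow> (\<forall>i<k. x$i + a$i = \<mu> * (x$i + a$i))"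
    using x a by (auto simp: vec_eq_iff)
  also have "\<dots> \<longleftrightarrow> (\<forall>i<k. x$i = - a$i)" using mu scal_fix
    by (metis add_eq_0_iff2 add.commute)
  also have "\<dots> \<longleftrightarrow> x = - a" using x a by (auto simp: vec_eq_iff)
  finally show ?thesis .
qed

lemma vec_eq3: assumes g: "g \<in> carrier_vec k" and z: "z \<in> carrier_vec k" and mu: "\<mu> \<noteq> (1::complex)"
  shows "(g + z = \<mu> \<cdot>\<^sub>v z) \<longleftrightarrow> z = (1 / (\<mu> - 1)) \<cdot>\<^sub>v g"
proof -
  have m: "\<mu> - 1 \<noteq> 0" using mu by simp
  have "(g + z = \<mu> \<cdot>\<^sub>v z) \<longleftrightarrow> (\<forall>i<k. g$i + z$i = \<mu> * z$i)"
    using g z by (auto simp: vec_eq_iff)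
  also have "\<dots> \<longleftrightarrow> (\<forall>i<k. z$i = 1 / (\<mu> - 1) * g$i)" using m
    by (intro all_cong1) (auto simp: field_simps)
  also have "\<dots> \<longleftrightarrow> z = (1 / (\<mu> - 1)) \<cdot>\<^sub>v g" using g z by (auto simp: vec_eq_iff)
  finally show ?thesis .
qed

lemma scal_eq2: assumes m: "\<mu> \<noteq> (1::complex)"
  shows "(u + 1 / (\<mu> - 1) * t = \<mu> * (w + 1 / (\<mu> - 1) * t)) \<longleftrightarrow> u - t = \<mu> * w"
proof -
  define c where "c = 1 / (\<mu> - 1)"
  have m': "\<mu> - 1 \<noteq> 0" using m by simp
  have key: "c - \<mu> * c = -1" unfolding c_def using m' by (simp add: field_simps)
  have "(u + c * t) - \<mu> * (w + c * t) = u - \<mu> * w + (c - \<mu> * c) * t" by (simp add: algebra_simps)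
  also have "\<dots> = (u - t) - \<mu> * w" unfolding key by simp
  finally have d: "(u + c * t) - \<mu> * (w + c * t) = (u - t) - \<mu> * w" .
  show ?thesis unfolding c_def[symmetric]
    by (metis d eq_iff_diff_eq_0)
qed

lemma vec_eq2: assumes u: "u \<in> carrier_vec k" and w: "w \<in> carrier_vec k" and t: "t \<in> carrier_vec k"
  and mu: "\<mu> \<noteq> (1::complex)"
  shows "(u + (1 / (\<mu> - 1)) \<cdot>\<^sub>v t = \<mu> \<cdot>\<^sub>v (w + (1 / (\<mu> - 1)) \<cdot>\<^sub>v t)) \<longleftrightarrow> u - t = \<mu> \<cdot>\<^sub>v w"
proof -
  have "(u + (1 / (\<mu> - 1)) \<cdot>\<^sub>v t = \<mu> \<cdot>\<^sub>v (w + (1 / (\<mu> - 1)) \<cdot>\<^sub>v t)) \<longleftrightarrow>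
     (\<forall>i<k. u$i + 1 / (\<mu> - 1) * t$i = \<mu> * (w$i + 1 / (\<mu> - 1) * t$i))"
    using u w t by (auto simp: vec_eq_iff)
  also have "\<dots> \<longleftrightarrow> (\<forall>i<k. u$i - t$i = \<mu> * w$i)" using scal_eq2[OF mu] by simp
  also have "\<dots> \<longleftrightarrow> u - t = \<mu> \<cdot>\<^sub>v w" using u w t by (auto simp: vec_eq_iff)
  finally show ?thesis .
qed

lemma vec_eq_one: assumes u: "u \<in> carrier_vec k" and w: "w \<in> carrier_vec k" and s: "s \<in> carrier_vec k"
  shows "(u + s = (1::complex) \<cdot>\<^sub>v (w + s)) \<longleftrightarrow> u = w"
  using u w s by (auto simp: vec_eq_iff)

lemma vec_eq_one3: assumes g: "g \<in> carrier_vec k" and z: "z \<in> carrier_vec k"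
  shows "(g + z = (1::complex) \<cdot>\<^sub>v z) \<longleftrightarrow> g = 0\<^sub>v k"
  using g z by (auto simp: vec_eq_iff)

context tsetup begin

abbreviation "W \<equiv> mat_kernel (cmat (Ph - P)) \<inter> mat_kernel (cmat A2)"
abbreviation "Wm \<equiv> cmat (Ph - P) @\<^sub>r cmat A2"

lemma Wm: "Wm \<in> carrier_mat (n + q) n"
proof -
  have "cmat (Ph - P) \<in> carrier_mat n n" using minus_carrier_mat[OF P] by simp
  moreover have "cmat A2 \<in> carrier_mat q n" using A2 by simp
  ultimately show ?thesis by (rule carrier_append_rows)
qed

lemma zero_append: "0\<^sub>v (n+q) = 0\<^sub>v n @\<^sub>v (0\<^sub>v q :: 'a :: zero vec)"
  by (intro eq_vecI) auto

lemma W_char: "y \<in> W \<longleftrightarrow> y \<in> carrier_vec n \<and> cmat P *\<^sub>v y = cmat Ph *\<^sub>v y \<and> a2 y = 0\<^sub>v q"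
proof -
  have c1: "cmat (Ph - P) \<in> carrier_mat n n" using minus_carrier_mat[OF P] by simp
  have c2: "cmat A2 \<in> carrier_mat q n" using A2 by auto
  have "y \<in> carrier_vec n \<Longrightarrow> cmat (Ph - P) *\<^sub>v y = cmat Ph *\<^sub>v y - cmat P *\<^sub>v y"
    using cmat_minus[OF Ph P] Ph P by (simp add: minus_mult_distrib_mat_vec)
  moreover have "y \<in> carrier_vec n \<Longrightarrow> (cmat Ph *\<^sub>v y - cmat P *\<^sub>v y = 0\<^sub>v n) \<longleftrightarrow> cmat P *\<^sub>v y = cmat Ph *\<^sub>v y"
    using Ph P by (auto simp: vec_eq_iff)
  ultimately show ?thesis using mat_kernel[OF c1] mat_kernel[OF c2] by auto
qed

lemma W_eq: "W = mat_kernel Wm"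
proof -
  have c1: "cmat (Ph - P) \<in> carrier_mat n n" using minus_carrier_mat[OF P] by simp
  have c2: "cmat A2 \<in> carrier_mat q n" using A2 by auto
  have "Wm *\<^sub>v v = 0\<^sub>v (n+q) \<longleftrightarrow> cmat (Ph - P) *\<^sub>v v = 0\<^sub>v n \<and> a2 v = 0\<^sub>v q" if v: "v \<in> carrier_vec n" for v
  proof -
    have cv: "cmat (Ph - P) *\<^sub>v v \<in> carrier_vec n" by (rule mult_mat_vec_carrier[OF c1 v])
    show ?thesis unfolding zero_append mat_mult_append[OF c1 c2 v] 
      by (rule append_vec_eq[OF cv zero_carrier_vec])
  qed
  thus ?thesis using mat_kernel[OF c1] mat_kernel[OF c2] mat_kernel[OF Wm] by auto
qed

lemma B_eq_one: assumes x: "x \<in> carrier_vec p" and y: "y \<in> carrier_vec n" and z: "z \<in> carrier_vec q"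
  shows "B *\<^sub>v (x @\<^sub>v y @\<^sub>v z) = x @\<^sub>v y @\<^sub>v z \<longleftrightarrow> y \<in> W"
proof -
  have "B *\<^sub>v (x @\<^sub>v y @\<^sub>v z) = x @\<^sub>v y @\<^sub>v z \<longleftrightarrow> B *\<^sub>v (x @\<^sub>v y @\<^sub>v z) = 1 \<cdot>\<^sub>v (x @\<^sub>v y @\<^sub>v z)" by simp
  also have "\<dots> \<longleftrightarrow> y \<in> W" 
  proof -
    have c: "a1 y \<in> carrier_vec p" "a2 y \<in> carrier_vec q" "cmat P *\<^sub>v y \<in> carrier_vec n"
      "cmat Ph *\<^sub>v y \<in> carrier_vec n" "a2t z \<in> carrier_vec n"
      using A1 A2 P Ph A2T y z by (auto intro!: mult_mat_vec_carrier[of _ _ n])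
    have e1: "x + a1 y = 1 \<cdot>\<^sub>v (x + a1 y)" by simp
    show ?thesis unfolding B_eq[OF x y z] W_char
      using e1 vec_eq_one[OF c(3) c(4) c(5)] vec_eq_one3[OF c(2) z] y by simp
  qed
  finally show ?thesis .
qed

lemma K_eq: assumes y: "y \<in> carrier_vec n" shows "cmat K *\<^sub>v y = cmat P *\<^sub>v y - cmat G *\<^sub>v y"
  using cmat_minus[OF P G] P G y by (simp add: minus_mult_distrib_mat_vec)

lemma G_eq: assumes y: "y \<in> carrier_vec n" shows "cmat G *\<^sub>v y = a2t (a2 y)"
  using cmat_mult[OF A2T A2] A2T A2 y by (simp add: assoc_mult_mat_vec)

lemma C_iff: assumes y: "y \<in> carrier_vec n"
  shows "C *\<^sub>v y = \<mu> \<cdot>\<^sub>v y \<longleftrightarrow> cmat K *\<^sub>v y = \<mu> \<cdot>\<^sub>v (cmat Ph *\<^sub>v y)"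
proof -
  have Pc: "cmat Phi \<in> carrier_mat n n" "cmat Ph \<in> carrier_mat n n" "cmat K \<in> carrier_mat n n"
    using Phi Ph K by auto
  have 1: "cmat Ph * cmat Phi = 1\<^sub>m n" "cmat Phi * cmat Ph = 1\<^sub>m n"
    using cmat_mult[OF Ph Phi(1)] cmat_mult[OF Phi(1) Ph] Phi cmat_one by auto
  have Cy: "C *\<^sub>v y = cmat Phi *\<^sub>v (cmat K *\<^sub>v y)"
    using cmat_mult[OF Phi(1) K] assoc_mult_mat_vec[OF Pc(1) Pc(3) y] by simp
  show ?thesis
  proof
    assume "C *\<^sub>v y = \<mu> \<cdot>\<^sub>v y"
    hence "cmat Ph *\<^sub>v (cmat Phi *\<^sub>v (cmat K *\<^sub>v y)) = cmat Ph *\<^sub>v (\<mu> \<cdot>\<^sub>v y)" using Cy by simp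
    thus "cmat K *\<^sub>v y = \<mu> \<cdot>\<^sub>v (cmat Ph *\<^sub>v y)"
      using assoc_mult_mat_vec[OF Pc(2) Pc(1), of "cmat K *\<^sub>v y"] Pc y 1 by (simp add: mult_mat_vec)
  next
    assume "cmat K *\<^sub>v y = \<mu> \<cdot>\<^sub>v (cmat Ph *\<^sub>v y)"
    hence "C *\<^sub>v y = cmat Phi *\<^sub>v (\<mu> \<cdot>\<^sub>v (cmat Ph *\<^sub>v y))" using Cy by simp
    also have "\<dots> = \<mu> \<cdot>\<^sub>v y" using Pc y 1 assoc_mult_mat_vec[OF Pc(1) Pc(2) y] by (simp add: mult_mat_vec)
    finally show "C *\<^sub>v y = \<mu> \<cdot>\<^sub>v y" .
  qed
qed

abbreviation "T \<mu> y \<equiv> (- a1 y) @\<^sub>v y @\<^sub>v ((1 / (\<mu> - 1)) \<cdot>\<^sub>v a2 y)"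

lemma B_eq_ne: assumes x: "x \<in> carrier_vec p" and y: "y \<in> carrier_vec n" and z: "z \<in> carrier_vec q"
  and mu: "\<mu> \<noteq> 1"
  shows "B *\<^sub>v (x @\<^sub>v y @\<^sub>v z) = \<mu> \<cdot>\<^sub>v (x @\<^sub>v y @\<^sub>v z) \<longleftrightarrow> C *\<^sub>v y = \<mu> \<cdot>\<^sub>v y \<and> x @\<^sub>v y @\<^sub>v z = T \<mu> y"
proof -
  have c: "a1 y \<in> carrier_vec p" "a2 y \<in> carrier_vec q" "cmat P *\<^sub>v y \<in> carrier_vec n"
    "cmat Ph *\<^sub>v y \<in> carrier_vec n" "cmat G *\<^sub>v y \<in> carrier_vec n"
    using A1 A2 P Ph G y by (auto intro!: mult_mat_vec_carrier[of _ _ n])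
  have e: "z = (1 / (\<mu> - 1)) \<cdot>\<^sub>v a2 y \<Longrightarrow> a2t z = (1 / (\<mu> - 1)) \<cdot>\<^sub>v (cmat G *\<^sub>v y)"
    using G_eq[OF y] A2T c by (simp add: mult_mat_vec)
  have ma: "- a1 y \<in> carrier_vec p" using c by simp
  have r: "x @\<^sub>v y @\<^sub>v z = T \<mu> y \<longleftrightarrow> x = - a1 y \<and> z = (1 / (\<mu> - 1)) \<cdot>\<^sub>v a2 y"
    using append3_eq[OF x ma y y] by simp
  have main: "(x = - a1 y \<and> cmat P *\<^sub>v y + a2t z = \<mu> \<cdot>\<^sub>v (cmat Ph *\<^sub>v y + a2t z) \<and> z = (1 / (\<mu> - 1)) \<cdot>\<^sub>v a2 y)
     \<longleftrightarrow> (cmat P *\<^sub>v y - cmat G *\<^sub>v y = \<mu> \<cdot>\<^sub>v (cmat Ph *\<^sub>v y) \<and> (x = - a1 y \<and> z = (1 / (\<mu> - 1)) \<cdot>\<^sub>v a2 y))"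
  proof (cases "z = (1 / (\<mu> - 1)) \<cdot>\<^sub>v a2 y")
    case True
    show ?thesis unfolding e[OF True] vec_eq2[OF c(3) c(4) c(5) mu] using True by auto
  qed auto
  show ?thesis
    unfolding B_eq[OF x y z] vec_eq1[OF x c(1) mu] vec_eq3[OF c(2) z mu] C_iff[OF y] K_eq[OF y] r
    by (rule main)
qed

end

lemma mat_vec_zero: "A \<in> carrier_mat r c \<Longrightarrow> A *\<^sub>v 0\<^sub>v c = (0\<^sub>v r :: 'a :: semiring_0 vec)"
  by (intro eq_vecI) (auto simp: scalar_prod_def)

lemma univ_ne_zero: "(UNIV :: 'a :: field set) \<noteq> {0}"
  by (metis UNIV_I singletonD zero_neq_one)

context vec_space begin

lemma lincomb_zero_iff: assumes X: "X \<subseteq> carrier_vec n"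
  shows "(lincomb a X = 0\<^sub>v n) \<longleftrightarrow> (\<forall>i<n. (\<Sum>x\<in>X. a x * x$i) = 0)"
proof -
  have c: "lincomb a X \<in> carrier_vec n" using lincomb_closed[of X a] X by auto
  show ?thesis using c lincomb_index[OF _ X] by (auto simp: vec_eq_iff)
qed

lemma indep_coeffs: assumes li: "\<not> lin_dep X" and fin: "finite X" and X: "X \<subseteq> carrier_vec n"
  and s: "\<forall>i<n. (\<Sum>x\<in>X. a x * x$i) = 0"
  shows "\<forall>x\<in>X. a x = 0"
proof -
  have "lincomb a X = 0\<^sub>v n" using lincomb_zero_iff[OF X] s by simp
  hence "a \<in> X \<rightarrow> {zero class_ring}" using not_lindepD[OF li fin subset_refl, of a] by auto
  thus ?thesis by (auto simp: class_ring_simps)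
qed

lemma indep_intro: assumes fin: "finite X" and X: "X \<subseteq> carrier_vec n"
  and h: "\<And>a. (\<forall>i<n. (\<Sum>x\<in>X. a x * x$i) = 0) \<Longrightarrow> (\<forall>x\<in>X. a x = 0)"
  shows "\<not> lin_dep X"
proof -
  show ?thesis
    apply (rule finite_lin_indpt2[OF fin X]) using lincomb_zero_iff[OF X] h by auto
qed

lemma mat_sum: fixes M :: "'a mat" assumes M: "M \<in> carrier_mat n n" and X: "X \<subseteq> carrier_vec n"
  and ev: "\<And>v. v \<in> X \<Longrightarrow> M *\<^sub>v v = f v \<cdot>\<^sub>v v" and i: "i < n"
  shows "(\<Sum>j<n. M$$(i,j) * (\<Sum>v\<in>X. a v * v$j)) = (\<Sum>v\<in>X. a v * f v * v$i)"
proof -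
  have "(\<Sum>j<n. M$$(i,j) * (\<Sum>v\<in>X. a v * v$j)) = (\<Sum>j<n. \<Sum>v\<in>X. a v * (M$$(i,j) * v$j))"
    unfolding sum_distrib_left by (rule sum.cong[OF refl], rule sum.cong[OF refl], rule mult.left_commute)
  also have "\<dots> = (\<Sum>v\<in>X. \<Sum>j<n. a v * (M$$(i,j) * v$j))" by (rule sum.swap)
  also have "\<dots> = (\<Sum>v\<in>X. a v * (M *\<^sub>v v)$i)"
  proof (rule sum.cong[OF refl])
    fix v assume v: "v \<in> X"
    have "(M *\<^sub>v v)$i = (\<Sum>j<n. M$$(i,j) * v$j)" using M i X v
      by (auto simp: scalar_prod_def lessThan_atLeast0 intro!: sum.cong)
    thus "(\<Sum>j<n. a v * (M$$(i,j) * v$j)) = a v * (M *\<^sub>v v)$i" by (simp add: sum_distrib_left)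
  qed
  also have "\<dots> = (\<Sum>v\<in>X. a v * f v * v$i)" 
    by (rule sum.cong[OF refl]) (use ev X i in auto)
  finally show ?thesis .
qed

lemma kernel_char: fixes M :: "'a mat" assumes M: "M \<in> carrier_mat n n"
  shows "v \<in> mat_kernel (char_matrix M e) \<longleftrightarrow> v \<in> carrier_vec n \<and> M *\<^sub>v v = e \<cdot>\<^sub>v v"
proof (cases "v = 0\<^sub>v n")
  case True
  thus ?thesis using M mat_kernel[OF char_matrix_closed[OF M]] mat_vec_zero[OF char_matrix_closed[OF M]]
    mat_vec_zero[OF M] by auto
next
  case False
  thus ?thesis using mat_kernel[OF char_matrix_closed[OF M]] eigenvector_char_matrix[OF M, of v e]
    M unfolding eigenvector_def by auto
qed

lemma GL: fixes M :: "'a mat" assumes M: "M \<in> carrier_mat n n" and fin: "finite L"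
  and S: "\<And>l. l \<in> L \<Longrightarrow> S l \<subseteq> mat_kernel (char_matrix M l) \<and> finite (S l) \<and> \<not> lin_dep (S l)"
  shows "\<not> lin_dep (\<Union>l\<in>L. S l)"
  using fin S
proof (induct L rule: finite_induct)
  case empty
  show ?case by (simp add: indep_intro)
next
  case (insert l0 L)
  define U where "U = (\<Union>l\<in>L. S l)"
  define S0 where "S0 = S l0"
  have IH: "\<not> lin_dep U" unfolding U_def using insert by auto
  have SS: "\<And>l. l \<in> insert l0 L \<Longrightarrow> S l \<subseteq> carrier_vec n \<and> (\<forall>v\<in>S l. M *\<^sub>v v = l \<cdot>\<^sub>v v) \<and> finite (S l) \<and> \<not> lin_dep (S l)"
    using insert(4) kernel_char[OF M] by blast
  have S0: "S0 \<subseteq> carrier_vec n" "\<And>v. v \<in> S0 \<Longrightarrow> M *\<^sub>v v = l0 \<cdot>\<^sub>v v" "finite S0" "\<not> lin_dep S0"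
    unfolding S0_def using SS[of l0] by auto
  have finU: "finite U" unfolding U_def using SS insert(1) by auto
  have Uc: "U \<subseteq> carrier_vec n" unfolding U_def using SS by auto
  have "\<forall>v\<in>U. \<exists>l\<in>L. v \<in> S l" unfolding U_def by auto
  then obtain f where f: "\<And>v. v \<in> U \<Longrightarrow> f v \<in> L \<and> v \<in> S (f v)" by metis
  have fU: "\<And>v. v \<in> U \<Longrightarrow> M *\<^sub>v v = f v \<cdot>\<^sub>v v" "\<And>v. v \<in> U \<Longrightarrow> f v \<noteq> l0"
    using f SS insert(2) by blast+
  have z0: "0\<^sub>v n \<notin> S0" using zero_nin_lin_indpt[OF _ S0(4)] S0(1) univ_ne_zero by (simp add: class_ring_simps)
  have disj: "S0 \<inter> U = {}"
  proof (rule ccontr)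
    assume "S0 \<inter> U \<noteq> {}"
    then obtain v where v: "v \<in> S0" "v \<in> U" by auto
    have "l0 \<cdot>\<^sub>v v = f v \<cdot>\<^sub>v v" using S0(2)[OF v(1)] fU(1)[OF v(2)] by simp
    have vc: "v \<in> carrier_vec n" using v S0(1) by auto
    have "\<forall>i<n. v$i = 0"
    proof (intro allI impI)
      fix i assume i: "i < n"
      have "l0 * v$i = f v * v$i" using arg_cong[OF \<open>l0 \<cdot>\<^sub>v v = f v \<cdot>\<^sub>v v\<close>, of "\<lambda>w. w$i"] i vc by simp
      thus "v$i = 0" using fU(2)[OF v(2)] by simp
    qed
    hence "v = 0\<^sub>v n" using vc by (intro eq_vecI) auto
    thus False using z0 v by simp
  qed
  have eqU: "(\<Union>l\<in>insert l0 L. S l) = S0 \<union> U" unfolding U_def S0_def by auto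
  show ?case unfolding eqU
  proof (rule indep_intro)
    show "finite (S0 \<union> U)" using finU S0(3) by simp
    show "S0 \<union> U \<subseteq> carrier_vec n" using Uc S0(1) by simp
    fix a assume h: "\<forall>i<n. (\<Sum>x\<in>S0 \<union> U. a x * x$i) = 0"
    have h2: "\<forall>i<n. (\<Sum>x\<in>S0. a x * x$i) = - (\<Sum>x\<in>U. a x * x$i)"
      using h by (simp add: sum.union_disjoint[OF S0(3) finU disj] eq_neg_iff_add_eq_0)
    have "\<forall>i<n. (\<Sum>x\<in>U. (a x * (f x - l0)) * x$i) = 0"
    proof (intro allI impI)
      fix i assume i: "i < n"
      have e1: "(\<Sum>j<n. M$$(i,j) * (\<Sum>v\<in>S0. a v * v$j)) = (\<Sum>v\<in>S0. a v * l0 * v$i)"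
        by (rule mat_sum[OF M S0(1) S0(2) i])
      have e2: "(\<Sum>j<n. M$$(i,j) * (\<Sum>v\<in>U. a v * v$j)) = (\<Sum>v\<in>U. a v * f v * v$i)"
        by (rule mat_sum[OF M Uc fU(1) i])
      have "(\<Sum>j<n. M$$(i,j) * (\<Sum>v\<in>S0. a v * v$j)) = (\<Sum>j<n. - (M$$(i,j) * (\<Sum>v\<in>U. a v * v$j)))"
        by (rule sum.cong[OF refl]) (use h2 in simp)
      also have "\<dots> = - (\<Sum>j<n. M$$(i,j) * (\<Sum>v\<in>U. a v * v$j))" by (rule sum_negf)
      finally have "(\<Sum>j<n. M$$(i,j) * (\<Sum>v\<in>S0. a v * v$j)) = - (\<Sum>j<n. M$$(i,j) * (\<Sum>v\<in>U. a v * v$j))" .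
      hence "(\<Sum>v\<in>S0. a v * l0 * v$i) = - (\<Sum>v\<in>U. a v * f v * v$i)" using e1 e2 by simp
      moreover have "(\<Sum>v\<in>S0. a v * l0 * v$i) = l0 * (\<Sum>v\<in>S0. a v * v$i)"
        unfolding sum_distrib_left by (rule sum.cong[OF refl]) (simp add: mult_ac)
      ultimately have "l0 * (- (\<Sum>x\<in>U. a x * x$i)) = - (\<Sum>v\<in>U. a v * f v * v$i)" using h2 i by simp
      hence "(\<Sum>v\<in>U. a v * f v * v$i) - l0 * (\<Sum>x\<in>U. a x * x$i) = 0" by simp
      moreover have "(\<Sum>v\<in>U. a v * f v * v$i) - l0 * (\<Sum>x\<in>U. a x * x$i) = (\<Sum>x\<in>U. (a x * (f x - l0)) * x$i)"
      proof -
        have "(\<Sum>x\<in>U. (a x * (f x - l0)) * x$i) = (\<Sum>x\<in>U. a x * f x * x$i - l0 * (a x * x$i))"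
          by (rule sum.cong[OF refl]) (simp add: right_diff_distrib left_diff_distrib mult_ac)
        also have "\<dots> = (\<Sum>x\<in>U. a x * f x * x$i) - (\<Sum>x\<in>U. l0 * (a x * x$i))" by (rule sum_subtractf)
        also have "(\<Sum>x\<in>U. l0 * (a x * x$i)) = l0 * (\<Sum>x\<in>U. a x * x$i)" by (rule sum_distrib_left[symmetric])
        finally show ?thesis by (rule sym)
      qed
      ultimately show "(\<Sum>x\<in>U. (a x * (f x - l0)) * x$i) = 0" by simp
    qed
    from indep_coeffs[OF IH finU Uc this] have aU: "\<forall>x\<in>U. a x = 0" using fU(2) by auto
    hence "\<forall>i<n. (\<Sum>x\<in>U. a x * x$i) = 0" by simp
    hence "\<forall>i<n. (\<Sum>x\<in>S0. a x * x$i) = 0" using h2 by simp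
    from indep_coeffs[OF S0(4) S0(3) S0(1) this] aU show "\<forall>x\<in>S0 \<union> U. a x = 0" by auto
  qed
qed

end

lemma zero_append2: "0\<^sub>v a @\<^sub>v 0\<^sub>v b = (0\<^sub>v (a+b) :: 'a :: zero vec)"
  by (intro eq_vecI) auto

lemma smult_mat_vec: assumes "A \<in> carrier_mat r c" "y \<in> carrier_vec c"
  shows "(k \<cdot>\<^sub>m A) *\<^sub>v y = k \<cdot>\<^sub>v (A *\<^sub>v (y :: 'a :: comm_ring_1 vec))"
  using assms by (intro eq_vecI) (auto simp: scalar_prod_def sum_distrib_left mult.assoc)

context tsetup begin

lemma split3: assumes v: "v \<in> carrier_vec N"
  shows "\<exists>x y z. x \<in> carrier_vec p \<and> y \<in> carrier_vec n \<and> z \<in> carrier_vec q \<and> v = x @\<^sub>v y @\<^sub>v z"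
proof -
  have v': "v \<in> carrier_vec (p + (n + q))" using v by (simp add: add.assoc)
  define r where "r = vec_last v (n + q)"
  have r: "r \<in> carrier_vec (n + q)" unfolding r_def by simp
  have "v = vec_first v p @\<^sub>v r" unfolding r_def using v' by simp
  moreover have "r = vec_first r n @\<^sub>v vec_last r q" using r by simp
  ultimately show ?thesis by (metis vec_first_carrier vec_last_carrier)
qed

lemma zero_N: "0\<^sub>v N = 0\<^sub>v p @\<^sub>v 0\<^sub>v n @\<^sub>v (0\<^sub>v q :: complex vec)"
  by (intro eq_vecI) auto

lemma T_carrier: assumes y: "y \<in> carrier_vec n" shows "T \<mu> y \<in> carrier_vec N"
proof -
  have "T \<mu> y \<in> carrier_vec (p + (n + q))" using y A1 A2 by (intro append_carrier_vec) auto
  thus ?thesis by (simp add: add.assoc)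
qed

lemma T_zero_iff: assumes y: "y \<in> carrier_vec n" shows "T \<mu> y = 0\<^sub>v N \<longleftrightarrow> y = 0\<^sub>v n"
proof
  assume "T \<mu> y = 0\<^sub>v N"
  hence "T \<mu> y = 0\<^sub>v p @\<^sub>v 0\<^sub>v n @\<^sub>v 0\<^sub>v q" unfolding zero_N .
  thus "y = 0\<^sub>v n" using append3_eq[of "- a1 y" p "0\<^sub>v p" y n "0\<^sub>v n"] y A1 by auto
next
  assume y0: "y = 0\<^sub>v n"
  have "a1 y = 0\<^sub>v p" "a2 y = 0\<^sub>v q" unfolding y0 using A1 A2 by (auto intro!: mat_vec_zero)
  thus "T \<mu> y = 0\<^sub>v N" unfolding zero_N using y0 by auto
qed

lemma B_T: assumes y: "y \<in> carrier_vec n" and mu: "\<mu> \<noteq> 1" and Cy: "C *\<^sub>v y = \<mu> \<cdot>\<^sub>v y"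
  shows "B *\<^sub>v T \<mu> y = \<mu> \<cdot>\<^sub>v T \<mu> y"
proof -
  have x: "- a1 y \<in> carrier_vec p" and z: "(1 / (\<mu> - 1)) \<cdot>\<^sub>v a2 y \<in> carrier_vec q" using y A1 A2 by auto
  show ?thesis using B_eq_ne[OF x y z mu] Cy by simp
qed

lemma eigvec_iff: assumes mu: "\<mu> \<noteq> 1"
  shows "eigenvector B v \<mu> \<longleftrightarrow> (\<exists>y. eigenvector C y \<mu> \<and> v = T \<mu> y)"
proof
  assume ev: "eigenvector B v \<mu>"
  hence v: "v \<in> carrier_vec N" "v \<noteq> 0\<^sub>v N" "B *\<^sub>v v = \<mu> \<cdot>\<^sub>v v" using B unfolding eigenvector_def by auto
  obtain x y z where xyz: "x \<in> carrier_vec p" "y \<in> carrier_vec n" "z \<in> carrier_vec q" "v = x @\<^sub>v y @\<^sub>v z"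
    using split3[OF v(1)] by blast
  have 1: "C *\<^sub>v y = \<mu> \<cdot>\<^sub>v y" "v = T \<mu> y" using B_eq_ne[OF xyz(1-3) mu] v(3) xyz(4) by auto
  have "y \<noteq> 0\<^sub>v n" using T_zero_iff[OF xyz(2), of \<mu>] 1(2) v(2) by auto
  hence "eigenvector C y \<mu>" using 1 xyz(2) C unfolding eigenvector_def by auto
  thus "\<exists>y. eigenvector C y \<mu> \<and> v = T \<mu> y" using 1 by auto
next
  assume "\<exists>y. eigenvector C y \<mu> \<and> v = T \<mu> y"
  then obtain y where ev: "eigenvector C y \<mu>" and v: "v = T \<mu> y" by auto
  have y: "y \<in> carrier_vec n" "y \<noteq> 0\<^sub>v n" "C *\<^sub>v y = \<mu> \<cdot>\<^sub>v y" using ev C unfolding eigenvector_def by auto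
  show "eigenvector B v \<mu>" unfolding eigenvector_def v using B T_carrier[OF y(1)] T_zero_iff[OF y(1)] y(2)
    B_T[OF y(1) mu y(3)] by auto
qed

definition "Tm \<mu> = (- cmat A1) @\<^sub>r (1\<^sub>m n @\<^sub>r ((1 / (\<mu> - 1)) \<cdot>\<^sub>m cmat A2))"

lemma Tm: "Tm \<mu> \<in> carrier_mat (p + (n + q)) n"
  unfolding Tm_def using A1 A2 by (intro carrier_append_rows) auto

lemma T_Tm: assumes y: "y \<in> carrier_vec n" shows "T \<mu> y = Tm \<mu> *\<^sub>v y"
proof -
  have c: "- cmat A1 \<in> carrier_mat p n" "1\<^sub>m n \<in> carrier_mat n n" "((1 / (\<mu> - 1)) \<cdot>\<^sub>m cmat A2) \<in> carrier_mat q n"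
    "cmat A2 \<in> carrier_mat q n" using A1 A2 by auto
  show ?thesis unfolding Tm_def
    by (subst mat_mult_append[OF c(1) _ y], use c in force, subst mat_mult_append[OF c(2) c(3) y],
      use c y in \<open>auto simp: smult_mat_vec[OF c(4) y]\<close>)
qed

end

context tsetup begin

lemma kdim_eq: assumes mu: "\<mu> \<noteq> 1"
  shows "kernel_dim (char_matrix B \<mu>) = kernel_dim (char_matrix C \<mu>)"
proof -
  interpret KC: kernel n n "char_matrix C \<mu>" using C by unfold_locales auto
  interpret KB: kernel N N "char_matrix B \<mu>" using B by unfold_locales auto
  have kC: "\<And>y. y \<in> mat_kernel (char_matrix C \<mu>) \<longleftrightarrow> y \<in> carrier_vec n \<and> C *\<^sub>v y = \<mu> \<cdot>\<^sub>v y"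
    by (rule vec_space.kernel_char[OF C])
  have kB: "\<And>y. y \<in> mat_kernel (char_matrix B \<mu>) \<longleftrightarrow> y \<in> carrier_vec N \<and> B *\<^sub>v y = \<mu> \<cdot>\<^sub>v y"
    by (rule vec_space.kernel_char[OF B])
  have Tin: "\<And>y. y \<in> mat_kernel (char_matrix C \<mu>) \<Longrightarrow> T \<mu> y \<in> mat_kernel (char_matrix B \<mu>)"
    using kC kB B_T T_carrier mu by auto
  have vsC: "vectorspace class_ring KC.VK" by (rule KC.Ker.vectorspace_axioms)
  have vsB: "vectorspace class_ring KB.VK" by (rule KB.Ker.vectorspace_axioms)
  have add: "\<And>m1 m2. m1 \<in> mat_kernel (char_matrix C \<mu>) \<Longrightarrow> m2 \<in> mat_kernel (char_matrix C \<mu>) \<Longrightarrow>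
      T \<mu> (m1 + m2) = T \<mu> m1 + T \<mu> m2"
  proof -
    fix m1 m2 assume "m1 \<in> mat_kernel (char_matrix C \<mu>)" "m2 \<in> mat_kernel (char_matrix C \<mu>)"
    hence m: "m1 \<in> carrier_vec n" "m2 \<in> carrier_vec n" using kC by auto
    show "T \<mu> (m1 + m2) = T \<mu> m1 + T \<mu> m2"
      using T_Tm[of "m1 + m2"] T_Tm[OF m(1)] T_Tm[OF m(2)] mult_add_distrib_mat_vec[OF Tm m] m by simp
  qed
  have sm: "\<And>r m. m \<in> mat_kernel (char_matrix C \<mu>) \<Longrightarrow> T \<mu> (r \<cdot>\<^sub>v m) = r \<cdot>\<^sub>v T \<mu> m"
  proof -
    fix r m assume "m \<in> mat_kernel (char_matrix C \<mu>)"
    hence m: "m \<in> carrier_vec n" using kC by auto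
    show "T \<mu> (r \<cdot>\<^sub>v m) = r \<cdot>\<^sub>v T \<mu> m"
      using T_Tm[of "r \<cdot>\<^sub>v m"] T_Tm[OF m] mult_mat_vec[OF Tm m] m by simp
  qed
  have hom: "T \<mu> \<in> LinearCombinations.module_hom class_ring KC.VK KB.VK"
    unfolding LinearCombinations.module_hom_def using Tin add sm by (auto simp: module_vec_simps)
  have lm: "linear_map class_ring KC.VK KB.VK (T \<mu>)"
    unfolding linear_map_def mod_hom_def mod_hom_axioms_def using vsC vsB hom unfolding vectorspace_def by auto
  have inj: "inj_on (T \<mu>) (carrier KC.VK)"
  proof (rule inj_onI)
    fix y1 y2 assume y: "y1 \<in> carrier KC.VK" "y2 \<in> carrier KC.VK" and e: "T \<mu> y1 = T \<mu> y2"
    have c: "y1 \<in> carrier_vec n" "y2 \<in> carrier_vec n" using y kC by auto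
    have "- a1 y1 \<in> carrier_vec p" "- a1 y2 \<in> carrier_vec p" using c A1 by auto
    from append3_eq[OF this c] e show "y1 = y2" by simp
  qed
  have surj: "T \<mu> ` carrier KC.VK = carrier KB.VK"
  proof
    show "T \<mu> ` carrier KC.VK \<subseteq> carrier KB.VK" using Tin by auto
    show "carrier KB.VK \<subseteq> T \<mu> ` carrier KC.VK"
    proof
      fix v assume "v \<in> carrier KB.VK"
      hence v: "v \<in> carrier_vec N" "B *\<^sub>v v = \<mu> \<cdot>\<^sub>v v" using kB by auto
      obtain x y z where xyz: "x \<in> carrier_vec p" "y \<in> carrier_vec n" "z \<in> carrier_vec q" "v = x @\<^sub>v y @\<^sub>v z"
        using split3[OF v(1)] by blast
      have 1: "C *\<^sub>v y = \<mu> \<cdot>\<^sub>v y" "v = T \<mu> y" using B_eq_ne[OF xyz(1-3) mu] v(2) xyz(4) by auto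
      have "y \<in> carrier KC.VK" using kC 1 xyz(2) by auto
      thus "v \<in> T \<mu> ` carrier KC.VK" using 1 by auto
    qed
  qed
  have fd: "KC.Ker.fin_dim"
  proof -
    obtain b where "finite b" "KC.basis b" using kernel_basis_exists[OF char_matrix_closed[OF C]] by auto
    thus ?thesis unfolding KC.Ker.fin_dim_def KC.Ker.basis_def by auto
  qed
  have "KC.dim = KB.dim" by (rule linear_map.dim_eq[OF lm fd inj surj])
  thus ?thesis by simp
qed

end

lemma qf_mult: assumes M: "M \<in> carrier_mat n n" and y: "y \<in> carrier_vec n"
  shows "qf M y = (\<Sum>i<n. cnj (y$i) * (cmat M *\<^sub>v y)$i)"
proof -
  have "\<And>i. i < n \<Longrightarrow> (cmat M *\<^sub>v y)$i = (\<Sum>j<n. of_real (M$$(i,j)) * y$j)"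
    using M y by (auto simp: cmat_def scalar_prod_def lessThan_atLeast0 intro!: sum.cong)
  thus ?thesis using y unfolding qf_def
    by (auto simp: sum_distrib_left mult.assoc intro!: sum.cong)
qed

lemma qf_lin: assumes y: "y \<in> carrier_vec n"
  and e: "\<And>i j. i < n \<Longrightarrow> j < n \<Longrightarrow> M$$(i,j) = a * M1$$(i,j) + b * M2$$(i,j)"
  shows "qf M y = of_real a * qf M1 y + of_real b * qf M2 y"
proof -
  have "qf M y = (\<Sum>i<n. \<Sum>j<n. of_real a * (cnj (y$i) * of_real (M1$$(i,j)) * y$j) + of_real b * (cnj (y$i) * of_real (M2$$(i,j)) * y$j))"
    unfolding qf_def using y e by (auto simp: algebra_simps intro!: sum.cong)
  thus ?thesis unfolding qf_def using y by (simp add: sum.distrib sum_distrib_left)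
qed

context tsetup begin

lemma p_pos: "0 < p"
proof (rule ccontr)
  assume "\<not> 0 < p"
  hence p0: "p = 0" by simp
  define v :: "real vec" where "v = unit_vec n 0"
  have v: "v \<in> carrier_vec n" "v \<noteq> 0\<^sub>v n" unfolding v_def using n_pos
    by (auto simp: vec_eq_iff)
  have pos: "v \<bullet> (K *\<^sub>v v) > 0" using P_spd v unfolding spd_def by auto
  have A1v: "A1 *\<^sub>v v \<in> carrier_vec 0" using A1 v p0 by auto
  have Pv: "P *\<^sub>v v = 0\<^sub>v n"
  proof -
    have "P *\<^sub>v v = transpose_mat A1 *\<^sub>v (A1 *\<^sub>v v)" unfolding Pmat_def using A1 v by auto
    also have "\<dots> = 0\<^sub>v n" using A1 p0 A1v by (intro eq_vecI) (auto simp: scalar_prod_def)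
    finally show ?thesis .
  qed
  have A2v: "A2 *\<^sub>v v \<in> carrier_vec q" using A2 v by auto
  have "v \<bullet> (G *\<^sub>v v) = (A2 *\<^sub>v v) \<bullet> (A2 *\<^sub>v v)"
  proof -
    have "v \<bullet> (G *\<^sub>v v) = v \<bullet> (transpose_mat A2 *\<^sub>v (A2 *\<^sub>v v))" using A2 v by auto
    also have "\<dots> = (transpose_mat A2 *\<^sub>v (A2 *\<^sub>v v)) \<bullet> v" using A2 v A2v
      by (intro comm_scalar_prod[of _ n]) auto
    also have "\<dots> = (A2 *\<^sub>v v) \<bullet> (A2 *\<^sub>v v)" by (rule transpose_vec_mult_scalar[OF A2 v(1) A2v])
    finally show ?thesis .
  qed
  moreover have "(A2 *\<^sub>v v) \<bullet> (A2 *\<^sub>v v) \<ge> 0" by (simp add: scalar_prod_def sum_nonneg)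
  moreover have "v \<bullet> (K *\<^sub>v v) = v \<bullet> (P *\<^sub>v v) - v \<bullet> (G *\<^sub>v v)"
    using P G v by (simp add: minus_mult_distrib_mat_vec scalar_prod_minus_distrib[of _ n])
  ultimately have "v \<bullet> (K *\<^sub>v v) \<le> 0" using Pv v by simp
  with pos show False by simp
qed

lemma finite_ev: "finite {\<mu>. eigenvalue B \<mu>}"
proof -
  have "char_poly B \<noteq> 0" using degree_monic_char_poly[OF B] by auto
  hence "finite {x. poly (char_poly B) x = 0}" by (rule poly_roots_finite)
  moreover have "{\<mu>. eigenvalue B \<mu>} \<subseteq> {x. poly (char_poly B) x = 0}"
    using eigenvalue_root_char_poly[OF B] by auto
  ultimately show ?thesis by (rule finite_subset[rotated])
qed

lemma ev_range: assumes ev: "eigenvalue B \<mu>"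
  shows "\<mu> \<in> \<real> \<and> 0 < Re \<mu> \<and> Re \<mu> < 2"
proof (cases "\<mu> = 1")
  case True thus ?thesis by simp
next
  case False
  obtain v where "eigenvector B v \<mu>" using ev unfolding eigenvalue_def by auto
  then obtain y where "eigenvector C y \<mu>" using eigvec_iff[OF False] by auto
  hence y: "y \<in> carrier_vec n" "y \<noteq> 0\<^sub>v n" "C *\<^sub>v y = \<mu> \<cdot>\<^sub>v y" using C unfolding eigenvector_def by auto
  have Ky: "cmat K *\<^sub>v y = \<mu> \<cdot>\<^sub>v (cmat Ph *\<^sub>v y)" using C_iff[OF y(1), THEN iffD1, OF y(3)] .
  have tq: "qf K y = \<mu> * qf Ph y"
  proof -
    have "qf K y = (\<Sum>i<n. cnj (y$i) * (cmat K *\<^sub>v y)$i)" by (rule qf_mult[OF K y(1)])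
    also have "\<dots> = (\<Sum>i<n. \<mu> * (cnj (y$i) * (cmat Ph *\<^sub>v y)$i))" unfolding Ky
      using Ph y(1) by (intro sum.cong refl) auto
    also have "\<dots> = \<mu> * qf Ph y" unfolding qf_mult[OF Ph y(1)] by (simp add: sum_distrib_left)
    finally show ?thesis .
  qed
  define Cd where "Cd = 2 \<cdot>\<^sub>m Ph - P + G"
  have uq: "qf Cd y = of_real 2 * qf Ph y + of_real (-1) * qf K y"
    by (rule qf_lin[OF y(1)]) (use Ph P G in \<open>auto simp: Cd_def\<close>)
  have s: "Re (qf Ph y) > 0" "Im (qf Ph y) = 0" using qf_pos[OF Ph_spd y(1) y(2)] by auto
  have t: "Re (qf K y) > 0" "Im (qf K y) = 0" using qf_pos[OF P_spd y(1) y(2)] by auto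
  have u: "Re (qf Cd y) > 0" using qf_pos[OF cond y(1) y(2)] unfolding Cd_def by auto
  define sr where "sr = Re (qf Ph y)"
  define tr where "tr = Re (qf K y)"
  have sr: "qf Ph y = of_real sr" using s unfolding sr_def by (simp add: complex_eq_iff)
  have tr: "qf K y = of_real tr" using t unfolding tr_def by (simp add: complex_eq_iff)
  have srp: "sr > 0" "tr > 0" using s t unfolding sr_def tr_def by auto
  have mu: "\<mu> = of_real (tr / sr)" using tq srp unfolding sr tr by (simp add: field_simps)
  have "2 * sr - tr > 0" using u unfolding uq sr tr by simp
  hence "tr / sr < 2" using srp by (simp add: field_simps)
  thus ?thesis unfolding mu using srp by simp
qed

end

lemma mv_self: "module_vec TYPE('a::field) k\<lparr>carrier := carrier_vec k\<rparr> = module_vec TYPE('a) k"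
  by (simp add: module_vec_def)

lemma full_basis: assumes "cbasis k (carrier_vec k) X"
  shows "X \<subseteq> carrier_vec k \<and> \<not> module.lin_dep class_ring (module_vec TYPE(complex) k) X \<and>
    LinearCombinations.module.span class_ring (module_vec TYPE(complex) k) X = carrier_vec k \<and> finite X \<and> card X = k"
proof -
  interpret VK: vec_space "TYPE(complex)" k .
  have b: "VK.basis X" using assms unfolding cbasis_def mv_self .
  hence 1: "X \<subseteq> carrier_vec k" "VK.lin_indpt X" "VK.span X = carrier_vec k" unfolding VK.basis_def by auto
  have f: "finite X" using VK.fin_dim_li_fin[OF VK.fin_dim 1(2) 1(1)] .
  have "VK.dim = card X" by (rule VK.dim_basis[OF f b])
  thus ?thesis using 1 f VK.dim_is_n by simp
qed

context tsetup begin

abbreviation "E1 \<equiv> mat_kernel (char_matrix B 1)"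

lemma E1_char: "v \<in> E1 \<longleftrightarrow> (\<exists>x y z. x \<in> carrier_vec p \<and> y \<in> W \<and> z \<in> carrier_vec q \<and> v = x @\<^sub>v y @\<^sub>v z)"
proof
  assume "v \<in> E1"
  hence v: "v \<in> carrier_vec N" "B *\<^sub>v v = v" using vec_space.kernel_char[OF B] by auto
  obtain x y z where xyz: "x \<in> carrier_vec p" "y \<in> carrier_vec n" "z \<in> carrier_vec q" "v = x @\<^sub>v y @\<^sub>v z"
    using split3[OF v(1)] by blast
  thus "\<exists>x y z. x \<in> carrier_vec p \<and> y \<in> W \<and> z \<in> carrier_vec q \<and> v = x @\<^sub>v y @\<^sub>v z"
    using B_eq_one[OF xyz(1-3)] v(2) by auto
next
  assume "\<exists>x y z. x \<in> carrier_vec p \<and> y \<in> W \<and> z \<in> carrier_vec q \<and> v = x @\<^sub>v y @\<^sub>v z"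
  then obtain x y z where xyz: "x \<in> carrier_vec p" "y \<in> W" "z \<in> carrier_vec q" "v = x @\<^sub>v y @\<^sub>v z" by blast
  have y: "y \<in> carrier_vec n" using xyz(2) W_char by auto
  have "v \<in> carrier_vec N" using xyz(1,3,4) y by (simp add: add.assoc)
  moreover have "B *\<^sub>v v = 1 \<cdot>\<^sub>v v" using B_eq_one[OF xyz(1) y xyz(3)] xyz by simp
  ultimately show "v \<in> E1" using vec_space.kernel_char[OF B] by auto
qed

end

context tsetup begin

lemma W_basis: assumes "cbasis n W Y"
  shows "Y \<subseteq> W \<and> \<not> module.lin_dep class_ring (module_vec TYPE(complex) n) Y \<and>
    LinearCombinations.module.span class_ring (module_vec TYPE(complex) n) Y = W \<and> finite Y \<and> card Y = cdim n W"
proof -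
  interpret KW: kernel "n + q" n Wm by unfold_locales (rule Wm)
  have b: "KW.basis Y" using assms unfolding cbasis_def W_eq .
  hence 1: "Y \<subseteq> mat_kernel Wm" "KW.lin_indpt Y" "KW.span Y = mat_kernel Wm" unfolding KW.Ker.basis_def by auto
  have fd: "KW.Ker.fin_dim"
  proof -
    obtain b where "finite b" "KW.basis b" using kernel_basis_exists[OF Wm] by auto
    thus ?thesis unfolding KW.Ker.fin_dim_def KW.Ker.basis_def by auto
  qed
  have f: "finite Y" using KW.Ker.fin_dim_li_fin[OF fd 1(2) 1(1)] .
  have "KW.dim = card Y" by (rule KW.Ker.dim_basis[OF f b])
  moreover have "cdim n W = KW.dim" unfolding cdim_def W_eq ..
  ultimately show ?thesis using 1 f KW.lindep_same[OF 1(1)] KW.span_same[OF 1(1)] W_eq by simp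
qed

lemma E1_basis:
  assumes X: "cbasis p (carrier_vec p) X" and Z: "cbasis q (carrier_vec q) Z" and Y: "cbasis n W Y"
  defines "U \<equiv> (\<lambda>x. x @\<^sub>v 0\<^sub>v n @\<^sub>v 0\<^sub>v q) ` X \<union> (\<lambda>z. 0\<^sub>v p @\<^sub>v 0\<^sub>v n @\<^sub>v z) ` Z \<union> (\<lambda>y. 0\<^sub>v p @\<^sub>v y @\<^sub>v 0\<^sub>v q) ` Y"
  shows "cbasis N E1 U \<and> finite U \<and> card U = p + q + cdim n W"
proof -
  interpret vardim "TYPE(complex)" .
  note x = full_basis[OF X]
  note z = full_basis[OF Z]
  note y = W_basis[OF Y]
  have Yc: "Y \<subseteq> carrier_vec n" using y W_char by auto
  define I where "I = padr q ` Y \<union> padl n ` Z"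
  have Ic: "I \<subseteq> carrier_vec (n + q)" unfolding I_def using padr_image[OF Yc] padl_image[of Z q n] z by auto
  have U: "U = padr (n + q) ` X \<union> padl p ` I"
  proof -
    have 1: "(\<lambda>x. x @\<^sub>v 0\<^sub>v n @\<^sub>v 0\<^sub>v q) ` X = padr (n + q) ` X" by (simp add: zero_append2)
    have 2: "(\<lambda>z. 0\<^sub>v p @\<^sub>v 0\<^sub>v n @\<^sub>v z) ` Z = padl p ` (padl n ` Z)" by (simp add: image_image)
    have 3: "(\<lambda>y. 0\<^sub>v p @\<^sub>v y @\<^sub>v 0\<^sub>v q) ` Y = padl p ` (padr q ` Y)" by (simp add: image_image)
    show ?thesis unfolding U_def 1 2 3 I_def by auto
  qed
  have liI: "\<not> lin_dep (n + q) I" unfolding I_def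
    by (rule padr_padl_lindep) (use y z Yc in auto)
  have liU: "\<not> lin_dep (p + (n + q)) U" unfolding U
    by (rule padr_padl_lindep) (use x Ic liI in auto)
  interpret VP: vec_space "TYPE(complex)" p .
  interpret Vn: vec_space "TYPE(complex)" n .
  have xs: "X \<subseteq> carrier_vec p" "\<not> VP.lin_dep X" using x by auto
  have ys: "\<not> Vn.lin_dep Y" using y by auto
  have z0: "0\<^sub>v p \<notin> X" "0\<^sub>v n \<notin> Y"
    using VP.zero_nin_lin_indpt[OF _ xs(2)] xs(1) Vn.zero_nin_lin_indpt[OF _ ys] Yc univ_ne_zero
    by (auto simp: class_ring_simps)
  have cI: "card I = card Y + card Z" unfolding I_def
    by (subst card_Un_disjoint) (use pad_disjoint[OF Yc z0(2), of Z q] z y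
       card_image[OF inj_on_subset[OF padr_inj[of q n] Yc]] card_image[OF inj_on_subset[OF padl_inj[of n q]], of Z]
      in auto)
  have fI: "finite I" unfolding I_def using y z by auto
  have cU: "card U = card X + card I" unfolding U
    by (subst card_Un_disjoint) (use pad_disjoint[of X p, OF _ z0(1) Ic] x fI
       card_image[OF inj_on_subset[OF padr_inj[of "n+q" p]], of X] card_image[OF inj_on_subset[OF padl_inj[of p "n+q"] Ic]]
      in auto)
  have fU: "finite U" unfolding U using x fI by auto
  interpret KE: kernel N N "char_matrix B 1" using B by unfold_locales auto
  interpret VN: vec_space "TYPE(complex)" "p + (n + q)" .
  interpret VI: vec_space "TYPE(complex)" "n + q" .
  have W0: "0\<^sub>v n \<in> W" unfolding W_char using P Ph A2 by (auto simp: cmat_carrier mat_vec_zero)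
  have e1: "\<And>a. a \<in> carrier_vec p \<Longrightarrow> a @\<^sub>v 0\<^sub>v n @\<^sub>v 0\<^sub>v q \<in> E1"
    subgoal for a by (rule E1_char[THEN iffD2], rule exI[of _ a], rule exI[of _ "0\<^sub>v n"], rule exI[of _ "0\<^sub>v q"]) (use W0 in simp)
    done
  have e2: "\<And>c. c \<in> carrier_vec q \<Longrightarrow> 0\<^sub>v p @\<^sub>v 0\<^sub>v n @\<^sub>v c \<in> E1"
    subgoal for c by (rule E1_char[THEN iffD2], rule exI[of _ "0\<^sub>v p"], rule exI[of _ "0\<^sub>v n"], rule exI[of _ c]) (use W0 in simp)
    done
  have e3: "\<And>b. b \<in> W \<Longrightarrow> 0\<^sub>v p @\<^sub>v b @\<^sub>v 0\<^sub>v q \<in> E1"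
    subgoal for b by (rule E1_char[THEN iffD2], rule exI[of _ "0\<^sub>v p"], rule exI[of _ b], rule exI[of _ "0\<^sub>v q"]) simp
    done
  have Ys: "Y \<subseteq> W" and Zs: "Z \<subseteq> carrier_vec q" using y z by auto
  have UE: "U \<subseteq> E1" unfolding U_def using e1 e2 e3 xs(1) Ys Zs by blast
  have Uc: "U \<subseteq> carrier_vec (p + (n + q))" unfolding U using padr_image[of X p "n+q"] padl_image[OF Ic, of p] x by auto
  have spE: "E1 \<subseteq> span (p + (n + q)) U"
  proof
    fix v assume "v \<in> E1"
    then obtain a b c where abc: "a \<in> carrier_vec p" "b \<in> W" "c \<in> carrier_vec q" "v = a @\<^sub>v b @\<^sub>v c"
      using E1_char by blast
    have bc: "b \<in> carrier_vec n" using abc(2) W_char by auto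
    have sa: "padr (n + q) a \<in> span (p + (n + q)) U"
    proof -
      have "padr (n + q) a \<in> padr (n + q) ` span p X" using x abc(1) by auto
      also have "\<dots> = span (p + (n + q)) (padr (n + q) ` X)" using span_pad(1)[of X p "n+q"] x by simp
      also have "\<dots> \<subseteq> span (p + (n + q)) U" unfolding U by (rule VN.span_is_monotone) auto
      finally show ?thesis .
    qed
    have sb: "padr q b \<in> span (n + q) I"
    proof -
      have "padr q b \<in> padr q ` span n Y" using y abc(2) by auto
      also have "\<dots> = span (n + q) (padr q ` Y)" using span_pad(1)[OF Yc, of q] by simp
      also have "\<dots> \<subseteq> span (n + q) I" unfolding I_def by (rule VI.span_is_monotone) auto
      finally show ?thesis .
    qed
    have sc: "padl n c \<in> span (n + q) I"
    proof -
      have "padl n c \<in> padl n ` span q Z" using z abc(3) by auto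
      also have "\<dots> = span (n + q) (padl n ` Z)" using span_pad(2)[of Z q n] z by (simp add: add.commute)
      also have "\<dots> \<subseteq> span (n + q) I" unfolding I_def by (rule VI.span_is_monotone) auto
      finally show ?thesis .
    qed
    have sbc: "padr q b + padl n c \<in> span (n + q) I" using VI.span_add1[OF Ic sb sc] by simp
    have sbc2: "padl p (padr q b + padl n c) \<in> span (p + (n + q)) U"
    proof -
      have "padl p (padr q b + padl n c) \<in> padl p ` span (n + q) I" using sbc by auto
      also have "\<dots> = span (p + (n + q)) (padl p ` I)" using span_pad(2)[OF Ic, of p] by (simp add: add.commute)
      also have "\<dots> \<subseteq> span (p + (n + q)) U" unfolding U by (rule VN.span_is_monotone) auto
      finally show ?thesis .
    qed
    have "v = padr (n + q) a + padl p (padr q b + padl n c)"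
      unfolding abc(4) using abc(1,3) bc by (intro eq_vecI) (auto simp: nth_append)
    thus "v \<in> span (p + (n + q)) U" using VN.span_add1[OF Uc sa sbc2] by simp
  qed
  have NN: "p + (n + q) = N" by simp
  have liU': "\<not> KE.NC.lin_dep U" using liU unfolding NN .
  have spU: "KE.NC.span U = E1"
  proof
    show "E1 \<subseteq> KE.NC.span U" using spE unfolding NN .
    have "KE.span U \<subseteq> E1" using KE.Ker.span_closed UE by auto
    thus "KE.NC.span U \<subseteq> E1" using KE.span_same[OF UE] by simp
  qed
  have "KE.basis U" unfolding KE.Ker.basis_def using KE.lindep_same[OF UE] KE.span_same[OF UE] liU' spU UE by simp
  hence "cbasis N E1 U" unfolding cbasis_def .
  thus ?thesis using fU cU cI x y z by simp
qed

end

context vec_space begin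

lemma GL_card: fixes M :: "'a mat" assumes M: "M \<in> carrier_mat n n" and fin: "finite L"
  and S: "\<And>l. l \<in> L \<Longrightarrow> S l \<subseteq> mat_kernel (char_matrix M l) \<and> finite (S l) \<and> \<not> lin_dep (S l)"
  shows "card (\<Union>l\<in>L. S l) = (\<Sum>l\<in>L. card (S l))"
proof (rule card_UN_disjoint[OF fin])
  show "\<forall>i\<in>L. finite (S i)" using S by auto
  show "\<forall>i\<in>L. \<forall>j\<in>L. i \<noteq> j \<longrightarrow> S i \<inter> S j = {}"
  proof (intro ballI impI)
    fix i j assume ij: "i \<in> L" "j \<in> L" "i \<noteq> j"
    show "S i \<inter> S j = {}"
    proof (rule ccontr)
      assume "S i \<inter> S j \<noteq> {}"
      then obtain v where v: "v \<in> S i" "v \<in> S j" by auto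
      have vi: "v \<in> carrier_vec n" "M *\<^sub>v v = i \<cdot>\<^sub>v v" using S[OF ij(1)] v(1) kernel_char[OF M] by auto
      have vj: "M *\<^sub>v v = j \<cdot>\<^sub>v v" using S[OF ij(2)] v(2) kernel_char[OF M] by auto
      have "\<forall>k<n. v$k = 0"
      proof (intro allI impI)
        fix k assume k: "k < n"
        have "i * v$k = j * v$k" using arg_cong[of _ _ "\<lambda>w. w$k", OF trans[OF vi(2)[symmetric] vj]] k vi(1) by simp
        thus "v$k = 0" using ij(3) by simp
      qed
      hence "v = 0\<^sub>v n" using vi(1) by (intro eq_vecI) auto
      moreover have "0\<^sub>v n \<notin> S i" using zero_nin_lin_indpt[OF _ conjunct2[OF conjunct2[OF S[OF ij(1)]]]]
        S[OF ij(1)] kernel_char[OF M] univ_ne_zero by (auto simp: class_ring_simps)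
      ultimately show False using v by simp
    qed
  qed
qed

end

lemma kernel_basis_good: assumes A: "(A :: 'a :: field mat) \<in> carrier_mat k k"
  shows "\<exists>b. finite b \<and> b \<subseteq> mat_kernel A \<and> \<not> module.lin_dep class_ring (module_vec TYPE('a) k) b \<and> card b = kernel_dim A"
proof -
  interpret KA: kernel k k A by unfold_locales (rule A)
  obtain b where b: "finite b" "KA.basis b" using kernel_basis_exists[OF A] by auto
  have sub: "b \<subseteq> mat_kernel A" using b(2) unfolding KA.Ker.basis_def by auto
  have "\<not> KA.NC.lin_dep b" using b(2) KA.lindep_same[OF sub] unfolding KA.Ker.basis_def by auto
  moreover have "card b = kernel_dim A" using KA.Ker.dim_basis[OF b] by simp
  ultimately show ?thesis using b sub by auto
qed

context tsetup begin

abbreviation "L1 \<equiv> {\<mu>. eigenvalue B \<mu> \<and> \<mu> \<noteq> 1}"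
abbreviation "hh \<equiv> (\<Sum>\<mu> | eigenvalue B \<mu> \<and> \<mu> \<noteq> 1. kernel_dim (char_matrix B \<mu>))"

lemma finite_L1: "finite L1" using finite_ev by (rule finite_subset[rotated]) auto

lemma h_le_n: "hh \<le> n"
proof -
  interpret Vn: vec_space "TYPE(complex)" n .
  have "\<forall>\<mu>. \<exists>b. finite b \<and> b \<subseteq> mat_kernel (char_matrix C \<mu>) \<and> \<not> Vn.lin_dep b \<and> card b = kernel_dim (char_matrix C \<mu>)"
    using kernel_basis_good[OF char_matrix_closed[OF C]] by blast
  then obtain SC where SC: "\<And>\<mu>. finite (SC \<mu>) \<and> SC \<mu> \<subseteq> mat_kernel (char_matrix C \<mu>) \<and> \<not> Vn.lin_dep (SC \<mu>) \<and> card (SC \<mu>) = kernel_dim (char_matrix C \<mu>)"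
    by metis
  have S': "\<And>l. l \<in> L1 \<Longrightarrow> SC l \<subseteq> mat_kernel (char_matrix C l) \<and> finite (SC l) \<and> \<not> Vn.lin_dep (SC l)" using SC by auto
  have li: "\<not> Vn.lin_dep (\<Union>l\<in>L1. SC l)" by (rule Vn.GL[OF C finite_L1 S'])
  have cd: "card (\<Union>l\<in>L1. SC l) = (\<Sum>l\<in>L1. card (SC l))" by (rule Vn.GL_card[OF C finite_L1 S'])
  also have "\<dots> = hh" using SC kdim_eq by (intro sum.cong refl) auto
  finally have "card (\<Union>l\<in>L1. SC l) = hh" .
  moreover have "(\<Union>l\<in>L1. SC l) \<subseteq> carrier_vec n" using SC mat_kernel_carrier[OF char_matrix_closed[OF C]] by blast
  ultimately show ?thesis using Vn.li_le_dim[OF Vn.fin_dim _ li] Vn.dim_is_n by simp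
qed

lemma E1_dim: "kernel_dim (char_matrix B 1) = p + q + cdim n W"
proof -
  interpret VP: vec_space "TYPE(complex)" p .
  interpret VQ: vec_space "TYPE(complex)" q .
  interpret KW: kernel "n + q" n Wm by unfold_locales (rule Wm)
  interpret KE: kernel N N "char_matrix B 1" using B by unfold_locales auto
  have X: "cbasis p (carrier_vec p) (set (unit_vecs p))" unfolding cbasis_def mv_self by (rule VP.unit_vecs_basis)
  have Z: "cbasis q (carrier_vec q) (set (unit_vecs q))" unfolding cbasis_def mv_self by (rule VQ.unit_vecs_basis)
  obtain Y where "finite Y" "KW.basis Y" using kernel_basis_exists[OF Wm] by auto
  hence Y: "cbasis n W Y" unfolding cbasis_def W_eq by simp
  define U where "U = (\<lambda>x. x @\<^sub>v 0\<^sub>v n @\<^sub>v 0\<^sub>v q) ` set (unit_vecs p) \<union> (\<lambda>z. 0\<^sub>v p @\<^sub>v 0\<^sub>v n @\<^sub>v z) ` set (unit_vecs q) \<union> (\<lambda>y. 0\<^sub>v p @\<^sub>v y @\<^sub>v 0\<^sub>v q) ` Y"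
  have U: "cbasis N E1 U \<and> finite U \<and> card U = p + q + cdim n W" using E1_basis[OF X Z Y] unfolding U_def .
  hence "KE.basis U" unfolding cbasis_def by simp
  hence "KE.dim = card U" using U KE.Ker.dim_basis by auto
  thus ?thesis using U by simp
qed

lemma ev1: "eigenvalue B 1"
proof -
  define v where "v = unit_vec p 0 @\<^sub>v 0\<^sub>v n @\<^sub>v (0\<^sub>v q :: complex vec)"
  have W0: "0\<^sub>v n \<in> W" unfolding W_char using P Ph A2 by (auto simp: cmat_carrier mat_vec_zero)
  have vE: "v \<in> E1" unfolding v_def
    by (rule E1_char[THEN iffD2], rule exI[of _ "unit_vec p 0"], rule exI[of _ "0\<^sub>v n"], rule exI[of _ "0\<^sub>v q"])
      (use W0 in simp)
  have vc: "v \<in> carrier_vec N" "B *\<^sub>v v = 1 \<cdot>\<^sub>v v" using vE vec_space.kernel_char[OF B] by auto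
  have "v $ 0 = 1" unfolding v_def using p_pos by simp
  hence "v \<noteq> 0\<^sub>v N" using p_pos by auto
  hence "eigenvector B v 1" unfolding eigenvector_def using vc B by auto
  thus ?thesis unfolding eigenvalue_def by auto
qed

lemma S_exists: "\<exists>S. finite S \<and> card S = p + q + cdim n W + hh \<and> clin_indpt N S \<and> (\<forall>v \<in> S. \<exists>\<mu>. eigenvector B v \<mu>)"
proof -
  interpret VN: vec_space "TYPE(complex)" N .
  define L where "L = {\<mu>. eigenvalue B \<mu>}"
  have fL: "finite L" unfolding L_def by (rule finite_ev)
  have "\<forall>\<mu>. \<exists>b. finite b \<and> b \<subseteq> mat_kernel (char_matrix B \<mu>) \<and> \<not> VN.lin_dep b \<and> card b = kernel_dim (char_matrix B \<mu>)"
    using kernel_basis_good[OF char_matrix_closed[OF B]] by blast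
  then obtain SB where SB: "\<And>\<mu>. finite (SB \<mu>) \<and> SB \<mu> \<subseteq> mat_kernel (char_matrix B \<mu>) \<and> \<not> VN.lin_dep (SB \<mu>) \<and> card (SB \<mu>) = kernel_dim (char_matrix B \<mu>)"
    by metis
  have S': "\<And>l. l \<in> L \<Longrightarrow> SB l \<subseteq> mat_kernel (char_matrix B l) \<and> finite (SB l) \<and> \<not> VN.lin_dep (SB l)" using SB by auto
  define S where "S = (\<Union>l\<in>L. SB l)"
  have li: "\<not> VN.lin_dep S" unfolding S_def by (rule VN.GL[OF B fL S'])
  have "card S = (\<Sum>l\<in>L. card (SB l))" unfolding S_def by (rule VN.GL_card[OF B fL S'])
  also have "\<dots> = (\<Sum>l\<in>L. kernel_dim (char_matrix B l))" using SB by simp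
  also have "\<dots> = kernel_dim (char_matrix B 1) + (\<Sum>l\<in>L - {1}. kernel_dim (char_matrix B l))"
    using ev1 fL unfolding L_def by (subst sum.remove[of _ 1]) auto
  also have "L - {1} = L1" unfolding L_def by auto
  finally have cS: "card S = p + q + cdim n W + hh" using E1_dim by simp
  have fS: "finite S" unfolding S_def using fL SB by auto
  have ev: "\<forall>v \<in> S. \<exists>\<mu>. eigenvector B v \<mu>"
  proof
    fix v assume "v \<in> S"
    then obtain l where l: "l \<in> L" "v \<in> SB l" unfolding S_def by auto
    have vk: "v \<in> carrier_vec N" "B *\<^sub>v v = l \<cdot>\<^sub>v v" using SB[of l] l(2) vec_space.kernel_char[OF B] by auto
    have "0\<^sub>v N \<notin> SB l" using VN.zero_nin_lin_indpt[OF _ conjunct1[OF conjunct2[OF conjunct2[OF SB[of l]]]]]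
      SB[of l] mat_kernel_carrier[OF char_matrix_closed[OF B]] univ_ne_zero by (auto simp: class_ring_simps)
    hence "v \<noteq> 0\<^sub>v N" using l by auto
    thus "\<exists>\<mu>. eigenvector B v \<mu>" unfolding eigenvector_def using vk B by auto
  qed
  show ?thesis using fS cS li ev unfolding clin_indpt_def by auto
qed

end

context tsetup begin

lemma main:
  "let B = cmat (the (mat_inverse (M4cal p n q A1 A2 Ph)) * Acal p n q A1 A2);
        C = cmat (the (mat_inverse Ph) * (Pmat A1 - transpose_mat A2 * A2));
        W = mat_kernel (cmat (Ph - Pmat A1)) \<inter> mat_kernel (cmat A2);
        d = cdim n W;
        E1 = mat_kernel (char_matrix B 1);
        h = (\<Sum>\<mu> | eigenvalue B \<mu> \<and> \<mu> \<noteq> 1. kernel_dim (char_matrix B \<mu>))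
    in
    (eigenvalue B 1 \<and> kernel_dim (char_matrix B 1) = p + q + d \<and>
     (\<forall>X Y Z. cbasis p (carrier_vec p) X \<and> cbasis q (carrier_vec q) Z \<and> cbasis n W Y \<longrightarrow>
        cbasis (p + n + q) E1
          ((\<lambda>x. x @\<^sub>v 0\<^sub>v n @\<^sub>v 0\<^sub>v q) ` X \<union> (\<lambda>z. 0\<^sub>v p @\<^sub>v 0\<^sub>v n @\<^sub>v z) ` Z
           \<union> (\<lambda>y. 0\<^sub>v p @\<^sub>v y @\<^sub>v 0\<^sub>v q) ` Y))) \<and>
    (\<forall>\<mu> v. \<mu> \<noteq> 1 \<longrightarrow>
        (eigenvector B v \<mu> \<longleftrightarrow>
          (\<exists>y. eigenvector C y \<mu> \<and>
               v = (- (cmat A1 *\<^sub>v y)) @\<^sub>v y @\<^sub>v ((1 / (\<mu> - 1)) \<cdot>\<^sub>v (cmat A2 *\<^sub>v y))))) \<and>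
    (\<forall>\<mu>. eigenvalue B \<mu> \<and> \<mu> \<noteq> 1 \<longrightarrow>
        kernel_dim (char_matrix B \<mu>) = kernel_dim (char_matrix C \<mu>) \<and>
        kernel_dim (char_matrix B \<mu>) \<le> h) \<and>
    h \<le> n \<and>
    (\<exists>S. finite S \<and> card S = p + q + d + h \<and> clin_indpt (p + n + q) S \<and>
         (\<forall>v \<in> S. \<exists>\<mu>. eigenvector B v \<mu>)) \<and>
    (\<forall>\<mu>. eigenvalue B \<mu> \<longrightarrow> \<mu> \<in> \<real> \<and> 0 < Re \<mu> \<and> Re \<mu> < 2)"
proof -
  have ii2: "\<forall>\<mu>. eigenvalue B \<mu> \<and> \<mu> \<noteq> 1 \<longrightarrow>
        kernel_dim (char_matrix B \<mu>) = kernel_dim (char_matrix C \<mu>) \<and> kernel_dim (char_matrix B \<mu>) \<le> hh"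
  proof (intro allI impI conjI)
    fix \<mu> assume "eigenvalue B \<mu> \<and> \<mu> \<noteq> 1"
    thus "kernel_dim (char_matrix B \<mu>) = kernel_dim (char_matrix C \<mu>)" using kdim_eq by auto
    show "kernel_dim (char_matrix B \<mu>) \<le> hh"
      by (rule member_le_sum) (use \<open>eigenvalue B \<mu> \<and> \<mu> \<noteq> 1\<close> finite_L1 in auto)
  qed
  have i3: "\<forall>X Y Z. cbasis p (carrier_vec p) X \<and> cbasis q (carrier_vec q) Z \<and> cbasis n W Y \<longrightarrow>
        cbasis (p + n + q) E1
          ((\<lambda>x. x @\<^sub>v 0\<^sub>v n @\<^sub>v 0\<^sub>v q) ` X \<union> (\<lambda>z. 0\<^sub>v p @\<^sub>v 0\<^sub>v n @\<^sub>v z) ` Z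
           \<union> (\<lambda>y. 0\<^sub>v p @\<^sub>v y @\<^sub>v 0\<^sub>v q) ` Y)"
    using E1_basis by blast
  have ii1: "\<forall>\<mu> v. \<mu> \<noteq> 1 \<longrightarrow>
        (eigenvector B v \<mu> \<longleftrightarrow>
          (\<exists>y. eigenvector C y \<mu> \<and>
               v = (- (cmat A1 *\<^sub>v y)) @\<^sub>v y @\<^sub>v ((1 / (\<mu> - 1)) \<cdot>\<^sub>v (cmat A2 *\<^sub>v y))))"
    using eigvec_iff by blast
  have iii: "\<forall>\<mu>. eigenvalue B \<mu> \<longrightarrow> \<mu> \<in> \<real> \<and> 0 < Re \<mu> \<and> Re \<mu> < 2" using ev_range by blast
  show ?thesis unfolding Let_def
    by (intro conjI ev1 E1_dim i3 ii1 ii2 h_le_n S_exists iii)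
qed

end

theorem theorem5:
  fixes p n q :: nat and A1 A2 Ph :: "real mat"
  assumes n_pos: "0 < n"
    and A1: "A1 \<in> carrier_mat p n" and A2: "A2 \<in> carrier_mat q n"
    and A1_rank: "vec_space.rank p A1 = n"
    and P_spd: "spd (Pmat A1 - transpose_mat A2 * A2) n"
    and Ph_spd: "spd Ph n"
    and cond: "spd (2 \<cdot>\<^sub>m Ph - Pmat A1 + transpose_mat A2 * A2) n"
  shows
   "let B = cmat (the (mat_inverse (M4cal p n q A1 A2 Ph)) * Acal p n q A1 A2);
        C = cmat (the (mat_inverse Ph) * (Pmat A1 - transpose_mat A2 * A2));
        W = mat_kernel (cmat (Ph - Pmat A1)) \<inter> mat_kernel (cmat A2);
        d = cdim n W;
        E1 = mat_kernel (char_matrix B 1);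
        h = (\<Sum>\<mu> | eigenvalue B \<mu> \<and> \<mu> \<noteq> 1. kernel_dim (char_matrix B \<mu>))
    in
    \<comment> \<open>(i)\<close>
    (eigenvalue B 1 \<and> kernel_dim (char_matrix B 1) = p + q + d \<and>
     (\<forall>X Y Z. cbasis p (carrier_vec p) X \<and> cbasis q (carrier_vec q) Z \<and> cbasis n W Y \<longrightarrow>
        cbasis (p + n + q) E1
          ((\<lambda>x. x @\<^sub>v 0\<^sub>v n @\<^sub>v 0\<^sub>v q) ` X \<union> (\<lambda>z. 0\<^sub>v p @\<^sub>v 0\<^sub>v n @\<^sub>v z) ` Z
           \<union> (\<lambda>y. 0\<^sub>v p @\<^sub>v y @\<^sub>v 0\<^sub>v q) ` Y))) \<and>
    \<comment> \<open>(ii)\<close>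
    (\<forall>\<mu> v. \<mu> \<noteq> 1 \<longrightarrow>
        (eigenvector B v \<mu> \<longleftrightarrow>
          (\<exists>y. eigenvector C y \<mu> \<and>
               v = (- (cmat A1 *\<^sub>v y)) @\<^sub>v y @\<^sub>v ((1 / (\<mu> - 1)) \<cdot>\<^sub>v (cmat A2 *\<^sub>v y))))) \<and>
    (\<forall>\<mu>. eigenvalue B \<mu> \<and> \<mu> \<noteq> 1 \<longrightarrow>
        kernel_dim (char_matrix B \<mu>) = kernel_dim (char_matrix C \<mu>) \<and>
        kernel_dim (char_matrix B \<mu>) \<le> h) \<and>
    h \<le> n \<and>
    (\<exists>S. finite S \<and> card S = p + q + d + h \<and> clin_indpt (p + n + q) S \<and>
         (\<forall>v \<in> S. \<exists>\<mu>. eigenvector B v \<mu>)) \<and>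
    \<comment> \<open>(iii)\<close>
    (\<forall>\<mu>. eigenvalue B \<mu> \<longrightarrow> \<mu> \<in> \<real> \<and> 0 < Re \<mu> \<and> Re \<mu> < 2)"
proof -
  interpret tsetup p n q A1 A2 Ph
    by (unfold_locales) (rule n_pos A1 A2 P_spd Ph_spd cond)+
  show ?thesis by (rule main)
qed


end
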